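(* Let $\Sigma\in\mathbb{R}^{p\times p}$ be positive definite, $\mathbf{X}\in\mathbb{R}^{n\times p}$ with i.i.d. $\mathcal{N}_p(0,\Sigma)$ rows, $\rho_\lambda:[0,\infty)\to[0,\infty)$ a regularizer, and $\hat B$ a global minimizer of $Q$ over $\mathbb{D}$. Let $C>0$ and $\delta_0>0$, assume $n>4(C+1)(d+1)\log p$ with $d=d(\Sigma)$, and let $\pi_0$ be a minimum-trace permutation with $$\frac{\rho_\lambda(\tilde B(\pi_0))}{\operatorname{tr}\tilde\Omega(\pi_0)}\ge\frac{1}{\delta_0}\sqrt{\frac{50(C+1)(d+1)\log p}{n}}.$$ Then for any $\hat\pi\in\hat\Pi$, $$\Pr\Big(\frac{1}{2n}\|\mathbf{X}-\mathbf{X}\tilde B(\pi_0)\|_F^2-\frac{1}{2n}\|\mathbf{X}-\mathbf{X}\tilde B(\hat\pi)\|_F^2>\delta_0\,\rho_\lambda(\tilde B(\pi_0))\Big)\le2e^{-C(d+1)\log p}.$$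
   Context: Setup. $\mathbb{D}$: real $p\times p$ matrices whose directed graph (edge $i\to j$ iff $b_{ij}\ne0$) is acyclic. For a permutation $\pi$, $(P_\pi A)_{ij}=a_{\pi(i)\pi(j)}$; write uniquely $P_\pi\Sigma^{-1}=(I-L)D^{-1}(I-L)^T$ ($L$ strictly lower triangular, $D$ positive diagonal), $\tilde B(\pi)=P_{\pi^{-1}}L$, $\tilde\Omega(\pi)=P_{\pi^{-1}}D$, columns $\tilde\beta_j(\pi)$. $\mathbb{D}[\pi]=\{B\in\mathbb{D}:P_\pi B\text{ lower triangular}\}$; $\hat\Pi=\{\pi:\hat B\in\mathbb{D}[\pi]\}$. $\rho_\lambda(B)=\sum_{i,j}\rho_\lambda(|b_{ij}|)$; $Q(B)=\frac1{2n}\|\mathbf{X}-\mathbf{X}B\|_F^2+\rho_\lambda(B)$. Minimum-trace permutation: any $\pi_0\in\arg\min_\pi\operatorname{tr}\tilde\Omega(\pi)$. $d(\Sigma)=\max_{\pi,j}\|\tilde\beta_j(\pi)\|_0$. *)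

theory Defs
  imports "HOL-Probability.Probability"
begin

(* Indices are the elements of a finite linearly ordered type 'p (p = CARD('p));
   the linear order plays the role of the order 1 < 2 < ... < p. *)

definition pos_def_mat :: "real^'p^'p \<Rightarrow> bool" where
  "pos_def_mat S \<longleftrightarrow> transpose S = S \<and> (\<forall>x. x \<noteq> 0 \<longrightarrow> x \<bullet> (S *v x) > 0)"

definition gauss_density :: "real^('p::finite)^'p \<Rightarrow> real^'p \<Rightarrow> real" where
  "gauss_density S x =
     (2 * pi) powr (- real CARD('p) / 2) * det S powr (-1/2) * exp (- (x \<bullet> (matrix_inv S *v x)) / 2)"

definition perm_mat :: "('p::finite \<Rightarrow> 'p) \<Rightarrow> 'a^'p^'p \<Rightarrow> 'a^'p^'p" where
  "perm_mat \<pi> A = (\<chi> i j. A $ \<pi> i $ \<pi> j)"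

definition strictly_lower :: "real^('p::{finite,linorder})^('p::{finite,linorder}) \<Rightarrow> bool" where
  "strictly_lower L \<longleftrightarrow> (\<forall>i j. i \<le> j \<longrightarrow> L $ i $ j = 0)"

definition lower_tri :: "real^('p::{finite,linorder})^('p::{finite,linorder}) \<Rightarrow> bool" where
  "lower_tri L \<longleftrightarrow> (\<forall>i j. i < j \<longrightarrow> L $ i $ j = 0)"

definition pos_diag :: "real^('p::finite)^'p \<Rightarrow> bool" where
  "pos_diag D \<longleftrightarrow> (\<forall>i j. i \<noteq> j \<longrightarrow> D $ i $ j = 0) \<and> (\<forall>i. D $ i $ i > 0)"

definition LD_fact :: "real^('p::{finite,linorder})^('p::{finite,linorder}) \<Rightarrow> (('p::{finite,linorder}) \<Rightarrow> ('p::{finite,linorder})) \<Rightarrow> (real^('p::{finite,linorder})^('p::{finite,linorder})) \<times> (real^('p::{finite,linorder})^('p::{finite,linorder}))" where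
  "LD_fact S \<pi> = (THE (L, D). strictly_lower L \<and> pos_diag D \<and>
       perm_mat \<pi> (matrix_inv S) = (mat 1 - L) ** matrix_inv D ** transpose (mat 1 - L))"

definition Btil :: "real^('p::{finite,linorder})^('p::{finite,linorder}) \<Rightarrow> (('p::{finite,linorder}) \<Rightarrow> ('p::{finite,linorder})) \<Rightarrow> real^('p::{finite,linorder})^('p::{finite,linorder})" where
  "Btil S \<pi> = perm_mat (inv \<pi>) (fst (LD_fact S \<pi>))"

definition Omtil :: "real^('p::{finite,linorder})^('p::{finite,linorder}) \<Rightarrow> (('p::{finite,linorder}) \<Rightarrow> ('p::{finite,linorder})) \<Rightarrow> real^('p::{finite,linorder})^('p::{finite,linorder})" where
  "Omtil S \<pi> = perm_mat (inv \<pi>) (snd (LD_fact S \<pi>))"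

definition min_trace_perm :: "real^('p::{finite,linorder})^('p::{finite,linorder}) \<Rightarrow> (('p::{finite,linorder}) \<Rightarrow> ('p::{finite,linorder})) \<Rightarrow> bool" where
  "min_trace_perm S \<pi>0 \<longleftrightarrow> \<pi>0 permutes UNIV \<and>
     (\<forall>\<pi>. \<pi> permutes UNIV \<longrightarrow> trace (Omtil S \<pi>0) \<le> trace (Omtil S \<pi>))"

definition dmax :: "real^('p::{finite,linorder})^('p::{finite,linorder}) \<Rightarrow> nat" where
  "dmax S = Max {card {i. Btil S \<pi> $ i $ j \<noteq> 0} | \<pi> j. \<pi> permutes (UNIV :: 'p set)}"

definition DAGs :: "(real^('p::finite)^'p) set" where
  "DAGs = {B. acyclic {(i, j). B $ i $ j \<noteq> 0}}"

definition DAGs_perm :: "(('p::{finite,linorder}) \<Rightarrow> ('p::{finite,linorder})) \<Rightarrow> (real^('p::{finite,linorder})^('p::{finite,linorder})) set" where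
  "DAGs_perm \<pi> = {B \<in> DAGs. lower_tri (perm_mat \<pi> B)}"

definition Pi_hat :: "real^('p::{finite,linorder})^('p::{finite,linorder}) \<Rightarrow> (('p::{finite,linorder}) \<Rightarrow> ('p::{finite,linorder})) set" where
  "Pi_hat Bh = {\<pi>. \<pi> permutes UNIV \<and> Bh \<in> DAGs_perm \<pi>}"

definition pen :: "(real \<Rightarrow> real) \<Rightarrow> real^('p::finite)^'p \<Rightarrow> real" where
  "pen \<rho> B = (\<Sum>i\<in>UNIV. \<Sum>j\<in>UNIV. \<rho> \<bar>B $ i $ j\<bar>)"

(* data matrix X with rows X 0, ..., X (n-1);  (1/(2n)) ||X - X B||_F^2 *)
definition lossF :: "nat \<Rightarrow> (nat \<Rightarrow> real^'p::finite) \<Rightarrow> real^'p^'p \<Rightarrow> real" where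
  "lossF n X B = (1 / (2 * real n)) * (\<Sum>i<n. (norm (X i - X i v* B))\<^sup>2)"

definition Qobj :: "nat \<Rightarrow> (nat \<Rightarrow> real^'p::finite) \<Rightarrow> (real \<Rightarrow> real) \<Rightarrow> real^'p^'p \<Rightarrow> real" where
  "Qobj n X \<rho> B = lossF n X B + pen \<rho> B"

end

theory Submission
  imports Defs
begin


lemma inv_unique_right:
  fixes A B :: "real^'n^'n"
  assumes "A ** B = mat 1"
  shows "matrix_inv A = B"
proof -
  have BA: "B ** A = mat 1" using assms matrix_left_right_inverse by blast
  have ex: "\<exists>A'. A ** A' = mat 1 \<and> A' ** A = mat 1" using assms BA by blast
  have s: "A ** matrix_inv A = mat 1 \<and> matrix_inv A ** A = mat 1"
    unfolding matrix_inv_def using someI_ex[OF ex] .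
  have "matrix_inv A = matrix_inv A ** (A ** B)" by (simp add: assms)
  also have "\<dots> = (matrix_inv A ** A) ** B" by (simp add: matrix_mul_assoc)
  also have "\<dots> = B" using s by simp
  finally show ?thesis .
qed

lemma quad_sum: "x \<bullet> (G *v x) = (\<Sum>i\<in>UNIV. x$i * (G *v x)$i)"
  by (simp add: inner_vec_def)

lemma pd_inj:
  assumes "pos_def_mat G" "G *v x = 0" shows "x = 0"
proof (rule ccontr)
  assume "x \<noteq> 0"
  then have "x \<bullet> (G *v x) > 0" using assms(1) unfolding pos_def_mat_def by blast
  with assms(2) show False by simp
qed

lemma pd_inv:
  fixes G :: "real^'n^'n"
  assumes "pos_def_mat G"
  shows "G ** matrix_inv G = mat 1" "matrix_inv G ** G = mat 1"
proof -
  obtain B where B: "B ** G = mat 1"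
    using matrix_left_invertible_ker[of G] pd_inj[OF assms] by blast
  then have GB: "G ** B = mat 1" using matrix_left_right_inverse by blast
  then have "matrix_inv G = B" by (rule inv_unique_right)
  then show "G ** matrix_inv G = mat 1" "matrix_inv G ** G = mat 1" using B GB by auto
qed

lemma pd_sym: "pos_def_mat G \<Longrightarrow> G $ i $ j = G $ j $ i"
  unfolding pos_def_mat_def by (metis transpose_def vec_lambda_beta)

lemma masked_solve:
  fixes G :: "real^'n^'n"
  assumes pd: "pos_def_mat G"
  shows "\<exists>l. (\<forall>i. \<not> P i \<longrightarrow> l$i = 0) \<and> (\<forall>i. P i \<longrightarrow> (G *v l)$i = b$i)"
proof -
  define M :: "real^'n^'n" where
    "M = (\<chi> i j. if P i then (if P j then G$i$j else 0) else (if i = j then 1 else 0))"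
  have Mv: "(M *v x)$i = (if P i then (\<Sum>j\<in>UNIV. (if P j then G$i$j * x$j else 0)) else x$i)" for x i
  proof (cases "P i")
    case True
    then show ?thesis unfolding M_def matrix_vector_mult_def
      by (simp, intro sum.cong) auto
  next
    case False
    have "(\<Sum>j\<in>UNIV. (if i = j then 1 else 0) * x$j) = x$i"
      by (simp add: if_distrib[of "\<lambda>t. t * _"] cong: if_cong)
    with False show ?thesis unfolding M_def matrix_vector_mult_def by simp
  qed
  have inj: "\<forall>x. M *v x = 0 \<longrightarrow> x = 0"
  proof (intro allI impI)
    fix x assume h: "M *v x = 0"
    have x0: "\<not> P i \<Longrightarrow> x$i = 0" for i using arg_cong[OF h, of "\<lambda>v. v$i"] Mv[of x i] by simp
    have Gx: "P i \<Longrightarrow> (G *v x)$i = 0" for i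
    proof -
      assume Pi: "P i"
      have "(G *v x)$i = (\<Sum>j\<in>UNIV. G$i$j * x$j)" by (simp add: matrix_vector_mult_def)
      also have "\<dots> = (\<Sum>j\<in>UNIV. (if P j then G$i$j * x$j else 0))"
        by (rule sum.cong) (auto simp: x0)
      also have "\<dots> = (M *v x)$i" using Mv[of x i] Pi by simp
      finally show ?thesis using h by simp
    qed
    have "x \<bullet> (G *v x) = (\<Sum>i\<in>UNIV. x$i * (G *v x)$i)" by (rule quad_sum)
    also have "\<dots> = 0" by (rule sum.neutral) (metis x0 Gx mult_zero_left mult_zero_right)
    finally have "x \<bullet> (G *v x) = 0" .
    then show "x = 0" using pd unfolding pos_def_mat_def by (metis less_irrefl)
  qed
  obtain B where B: "B ** M = mat 1" using matrix_left_invertible_ker[of M] inj by blast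
  then have MB: "M ** B = mat 1" using matrix_left_right_inverse by blast
  define b' where "b' = (\<chi> i. if P i then b$i else 0)"
  define l where "l = B *v b'"
  have Ml: "M *v l = b'" unfolding l_def by (simp add: matrix_vector_mul_assoc MB)
  have l0: "\<not> P i \<Longrightarrow> l$i = 0" for i using arg_cong[OF Ml, of "\<lambda>v. v$i"] Mv[of l i] by (simp add: b'_def)
  have "P i \<Longrightarrow> (G *v l)$i = b$i" for i
  proof -
    assume Pi: "P i"
    have "(G *v l)$i = (\<Sum>j\<in>UNIV. G$i$j * l$j)" by (simp add: matrix_vector_mult_def)
    also have "\<dots> = (\<Sum>j\<in>UNIV. (if P j then G$i$j * l$j else 0))"
      by (rule sum.cong) (auto simp: l0)
    also have "\<dots> = (M *v l)$i" using Mv[of l i] Pi by simp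
    finally show ?thesis using Ml Pi by (simp add: b'_def)
  qed
  with l0 show ?thesis by blast
qed



lemma ldl_exists:
  fixes G :: "real^('p::{finite,linorder})^('p::{finite,linorder})"
  assumes pd: "pos_def_mat G"
  shows "\<exists>U. (\<forall>k. U$k$k = 1) \<and> (\<forall>i k. i < k \<longrightarrow> U$i$k = 0) \<and> (\<forall>i k. k < i \<longrightarrow> (G ** U)$i$k = 0)"
proof -
  have "\<forall>k. \<exists>l. (\<forall>i. \<not> k < i \<longrightarrow> l$i = 0) \<and> (\<forall>i. k < i \<longrightarrow> (G *v l)$i = (\<chi> i. G$i$k)$i)"
    using masked_solve[OF pd] by blast
  then obtain lf where lf: "\<And>k i. \<not> k < i \<Longrightarrow> lf k $ i = 0" "\<And>k i. k < i \<Longrightarrow> (G *v lf k)$i = G$i$k"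
    by (metis vec_lambda_beta)
  define U where "U = (\<chi> i k. (if i = k then 1 else 0) - lf k $ i)"
  have "U$k$k = 1" for k by (simp add: U_def lf)
  moreover have "i < k \<Longrightarrow> U$i$k = 0" for i k by (simp add: U_def lf)
  moreover have "k < i \<Longrightarrow> (G ** U)$i$k = 0" for i k
  proof -
    assume ki: "k < i"
    have "(G ** U)$i$k = (\<Sum>j\<in>UNIV. G$i$j * ((if j = k then 1 else 0) - lf k $ j))"
      by (simp add: matrix_matrix_mult_def U_def)
    also have "\<dots> = (\<Sum>j\<in>UNIV. (if j = k then G$i$j else 0)) - (\<Sum>j\<in>UNIV. G$i$j * lf k $ j)"
      by (simp add: right_diff_distrib sum_subtractf if_distrib[of "\<lambda>t. _ * t"] cong: if_cong)
    also have "\<dots> = G$i$k - (G *v lf k)$i" by (simp add: matrix_vector_mult_def)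
    also have "\<dots> = 0" using lf(2)[OF ki] by simp
    finally show ?thesis .
  qed
  ultimately show ?thesis by blast
qed

lemma sum_single_nz:
  fixes f :: "'a::finite \<Rightarrow> real"
  assumes "\<And>b. b \<noteq> a \<Longrightarrow> f b = 0"
  shows "(\<Sum>b\<in>UNIV. f b) = f a"
  using assms by (subst sum.remove[of _ a]) (auto intro!: sum.neutral)

lemma ortho_gen:
  fixes G U D :: "real^('p::finite)^('p::finite)" and r :: "'p \<Rightarrow> 'b::linorder"
  assumes r: "inj r"
    and U1: "\<And>k. U$k$k = 1" and U0: "\<And>i k. r i < r k \<Longrightarrow> U$i$k = 0"
    and Dd: "\<And>i k. i \<noteq> k \<Longrightarrow> (transpose U ** G ** U)$i$k = 0"
    and ki: "r k < r i"
  shows "(G ** U)$i$k = 0"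
proof (rule ccontr)
  define W where "W = G ** U"
  define T where "T = {i. r k < r i \<and> W$i$k \<noteq> 0}"
  assume "(G ** U)$i$k \<noteq> 0"
  then have "i \<in> T" using ki by (simp add: T_def W_def)
  have finT: "finite (r ` T)" by simp
  have ne: "r ` T \<noteq> {}" using \<open>i \<in> T\<close> by blast
  obtain i0 where i0T: "i0 \<in> T" and i0max: "r i0 = Max (r ` T)"
    using Max_in[OF finT ne] by auto
  have mx: "j \<in> T \<Longrightarrow> r j \<le> r i0" for j using i0max finT by simp
  have "(transpose U ** W)$i0$k = (\<Sum>b\<in>UNIV. U$b$i0 * W$b$k)"
    by (simp add: matrix_matrix_mult_def transpose_def)
  also have "\<dots> = U$i0$i0 * W$i0$k"
  proof (rule sum_single_nz)
    fix b assume "b \<noteq> i0"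
    then have "r b \<noteq> r i0" using r by (meson injD)
    show "U$b$i0 * W$b$k = 0"
    proof (cases "r b < r i0")
      case True then show ?thesis using U0 by simp
    next
      case False
      then have "r i0 < r b" using \<open>r b \<noteq> r i0\<close> by simp
      moreover have "r k < r i0" using i0T by (simp add: T_def)
      ultimately have "b \<notin> T" using mx by (meson not_le)
      moreover have "r k < r b" using \<open>r k < r i0\<close> \<open>r i0 < r b\<close> by simp
      ultimately show ?thesis by (simp add: T_def)
    qed
  qed
  also have "\<dots> = W$i0$k" using U1 by simp
  finally have e: "(transpose U ** W)$i0$k = W$i0$k" .
  have "i0 \<noteq> k" using i0T by (auto simp: T_def)
  then have "(transpose U ** W)$i0$k = 0" using Dd unfolding W_def by (simp add: matrix_mul_assoc)
  with e i0T show False by (simp add: T_def)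
qed

lemma col_quad:
  "(transpose U ** G ** U)$k$k = column k U \<bullet> (G *v column k U)"
proof -
  have "(transpose U ** G ** U)$k$k = (\<Sum>n\<in>UNIV. \<Sum>i\<in>UNIV. U$i$k * G$i$n * U$n$k)"
    by (simp add: matrix_matrix_mult_def transpose_def sum_distrib_right)
  also have "\<dots> = (\<Sum>i\<in>UNIV. \<Sum>n\<in>UNIV. U$i$k * G$i$n * U$n$k)" by (rule sum.swap)
  also have "\<dots> = column k U \<bullet> (G *v column k U)"
    by (simp add: column_def inner_vec_def matrix_vector_mult_def sum_distrib_left mult.assoc)
  finally show ?thesis .
qed

lemma ldl_diag:
  fixes G U :: "real^('p::finite)^('p::finite)" and r :: "'p \<Rightarrow> 'b::linorder"
  assumes r: "inj r"
    and U0: "\<And>i k. r i < r k \<Longrightarrow> U$i$k = 0"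
    and orth: "\<And>i k. r k < r i \<Longrightarrow> (G ** U)$i$k = 0"
    and GT: "transpose G = G"
    and ik: "i \<noteq> k"
  shows "(transpose U ** G ** U)$i$k = 0"
proof -
  have C: "(transpose U ** G ** U)$a$c = 0" if ca: "r c < r a" for a c
  proof -
    have "(transpose U ** G ** U)$a$c = (transpose U ** (G ** U))$a$c"
      by (simp add: matrix_mul_assoc)
    also have "\<dots> = (\<Sum>b\<in>UNIV. U$b$a * (G ** U)$b$c)"
      by (simp only: matrix_matrix_mult_def transpose_def vec_lambda_beta)
    also have "\<dots> = 0"
    proof (rule sum.neutral, intro ballI)
      fix b
      show "U$b$a * (G ** U)$b$c = 0"
      proof (cases "r b < r a")
        case True then show ?thesis using U0 by simp
      next
        case False then have "r c < r b" using ca by simp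
        then show ?thesis using orth by simp
      qed
    qed
    finally show ?thesis .
  qed
  have sym: "transpose (transpose U ** G ** U) = transpose U ** G ** U"
    by (simp add: matrix_transpose_mul matrix_mul_assoc GT)
  have "r i \<noteq> r k" using ik r by (meson injD)
  then consider "r k < r i" | "r i < r k" by fastforce
  then show ?thesis
  proof cases
    case 1 then show ?thesis by (rule C)
  next
    case 2
    have "(transpose U ** G ** U)$i$k = transpose (transpose U ** G ** U) $ i $ k" by (simp add: sym)
    also have "\<dots> = (transpose U ** G ** U)$k$i" by (simp add: transpose_def)
    also have "\<dots> = 0" using C[OF 2] .
    finally show ?thesis .
  qed
qed

lemma ldl_diag_pos:
  assumes pd: "pos_def_mat G" and U1: "U$k$k = 1"
  shows "(transpose U ** G ** U)$k$k > 0"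
proof -
  have "column k U \<noteq> 0" using U1 by (metis column_def vec_lambda_beta zero_index zero_neq_one)
  then show ?thesis using pd unfolding col_quad pos_def_mat_def by auto
qed

definition dinv :: "real^'n^'n \<Rightarrow> real^'n^'n" where
  "dinv D = (\<chi> i j. if i = j then 1 / D$i$i else 0)"

lemma dinv_right:
  fixes D :: "real^('n::finite)^('n::finite)"
  assumes "\<And>i j. i \<noteq> j \<Longrightarrow> D$i$j = 0" "\<And>i. D$i$i \<noteq> 0"
  shows "D ** dinv D = mat 1"
proof -
  have "(D ** dinv D)$i$k = (if i = k then 1 else 0)" for i k
  proof -
    have "(D ** dinv D)$i$k = (\<Sum>j\<in>UNIV. D$i$j * (if j = k then 1 / D$j$j else 0))"
      by (simp add: matrix_matrix_mult_def dinv_def)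
    also have "\<dots> = D$i$k * (1 / D$k$k)"
      by (subst sum_single_nz[where a=k]) auto
    also have "\<dots> = (if i = k then 1 else 0)" using assms by auto
    finally show ?thesis .
  qed
  then show ?thesis by (simp add: vec_eq_iff mat_def)
qed

lemma ldl_inv:
  fixes G U :: "real^('n::finite)^('n::finite)"
  assumes off: "\<And>i j. i \<noteq> j \<Longrightarrow> (transpose U ** G ** U)$i$j = 0"
    and dg: "\<And>i. (transpose U ** G ** U)$i$i \<noteq> 0"
  shows "matrix_inv G = U ** dinv (transpose U ** G ** U) ** transpose U"
    "matrix_inv (transpose U ** G ** U) = dinv (transpose U ** G ** U)"
proof -
  define D where "D = transpose U ** G ** U"
  have DD: "D ** dinv D = mat 1" unfolding D_def by (rule dinv_right[OF off dg])
  then show "matrix_inv (transpose U ** G ** U) = dinv (transpose U ** G ** U)"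
    unfolding D_def by (rule inv_unique_right)
  have "transpose U ** (G ** U ** dinv D) = mat 1" using DD unfolding D_def by (simp add: matrix_mul_assoc)
  then have "(G ** U ** dinv D) ** transpose U = mat 1" using matrix_left_right_inverse by blast
  then have "G ** (U ** dinv D ** transpose U) = mat 1" by (simp add: matrix_mul_assoc)
  then show "matrix_inv G = U ** dinv (transpose U ** G ** U) ** transpose U"
    unfolding D_def by (rule inv_unique_right)
qed

lemma ldl_conv:
  fixes G U D :: "real^('n::finite)^('n::finite)"
  assumes pd: "pos_def_mat G" and D: "pos_diag D"
    and eq: "matrix_inv G = U ** matrix_inv D ** transpose U"
  shows "transpose U ** G ** U = D"
proof -
  have D1: "\<And>i j. i \<noteq> j \<Longrightarrow> D$i$j = 0" using D unfolding pos_diag_def by blast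
  have D2: "\<And>i. D$i$i \<noteq> 0" using D unfolding pos_diag_def by (metis less_irrefl)
  have DD: "D ** dinv D = mat 1" using D1 D2 by (rule dinv_right)
  then have mD: "matrix_inv D = dinv D" by (rule inv_unique_right)
  have "matrix_inv G ** G = mat 1" using pd_inv[OF pd] by simp
  then have "U ** (dinv D ** transpose U ** G) = mat 1" using eq mD by (simp add: matrix_mul_assoc)
  then have "(dinv D ** transpose U ** G) ** U = mat 1" using matrix_left_right_inverse by blast
  then have "D ** ((dinv D ** transpose U ** G) ** U) = D" by simp
  then have "(D ** dinv D) ** (transpose U ** G ** U) = D" by (simp add: matrix_mul_assoc)
  then show ?thesis using DD by simp
qed

lemma col_mult: "(G *v column k U) $ i = (G ** U) $ i $ k"
  by (simp add: matrix_vector_mult_def matrix_matrix_mult_def column_def)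

lemma ldl_unique:
  fixes G U U' :: "real^('p::{finite,linorder})^('p::{finite,linorder})"
  assumes pd: "pos_def_mat G"
    and U1: "\<And>k. U$k$k = 1" and U0: "\<And>i k. i < k \<Longrightarrow> U$i$k = 0"
    and Uo: "\<And>i k. k < i \<Longrightarrow> (G ** U)$i$k = 0"
    and V1: "\<And>k. U'$k$k = 1" and V0: "\<And>i k. i < k \<Longrightarrow> U'$i$k = 0"
    and Vo: "\<And>i k. k < i \<Longrightarrow> (G ** U')$i$k = 0"
  shows "U = U'"
proof -
  have col: "column k U = column k U'" for k
  proof -
    define d where "d = column k U - column k U'"
    have d0: "\<not> k < i \<Longrightarrow> d$i = 0" for i
      using U0 V0 U1 V1 by (cases "i = k") (auto simp: d_def column_def)
    have Gd: "k < i \<Longrightarrow> (G *v d)$i = 0" for i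
      by (simp add: d_def matrix_vector_mult_diff_distrib col_mult Uo Vo)
    have "d \<bullet> (G *v d) = (\<Sum>i\<in>UNIV. d$i * (G *v d)$i)" by (rule quad_sum)
    also have "\<dots> = 0" by (rule sum.neutral) (metis d0 Gd mult_zero_left mult_zero_right)
    finally have "d = 0" using pd unfolding pos_def_mat_def by (metis less_irrefl)
    then show ?thesis by (simp add: d_def)
  qed
  have "U$i$k = U'$i$k" for i k
  proof -
    have "column k U $ i = column k U' $ i" using col by simp
    then show ?thesis by (simp add: column_def)
  qed
  then show ?thesis by (simp add: vec_eq_iff)
qed


lemma perm_mat_mult:
  assumes p: "\<pi> permutes (UNIV::'n::finite set)"
  shows "perm_mat \<pi> (A ** B) = perm_mat \<pi> A ** perm_mat \<pi> (B::real^'n^'n)"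
proof -
  have "(A ** B)$(\<pi> i)$(\<pi> j) = (\<Sum>k\<in>UNIV. A$(\<pi> i)$(\<pi> k) * B$(\<pi> k)$(\<pi> j))" for i j
    by (simp add: matrix_matrix_mult_def) (subst sum.permute[OF p], simp add: comp_def)
  then show ?thesis by (simp add: perm_mat_def matrix_matrix_mult_def vec_eq_iff)
qed

lemma perm_mat_one:
  assumes p: "\<pi> permutes (UNIV::'n::finite set)"
  shows "perm_mat \<pi> (mat 1 :: real^'n^'n) = mat 1"
  using permutes_inj[OF p] by (simp add: perm_mat_def mat_def vec_eq_iff inj_eq)

lemma perm_mat_transpose: "perm_mat \<pi> (transpose A) = transpose (perm_mat \<pi> A)"
  by (simp add: perm_mat_def transpose_def vec_eq_iff)

lemma perm_mat_diff: "perm_mat \<pi> (A - B) = perm_mat \<pi> A - perm_mat \<pi> (B::real^'n^'n)"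
  by (simp add: perm_mat_def vec_eq_iff)

lemma perm_mat_cancel:
  assumes p: "\<pi> permutes (UNIV::'n::finite set)"
  shows "perm_mat (inv \<pi>) (perm_mat \<pi> A) = (A::real^'n^'n)"
  by (simp add: perm_mat_def vec_eq_iff permutes_inverses(1)[OF p])

lemma perm_matrix_inv:
  assumes pd: "pos_def_mat S" and p: "\<pi> permutes (UNIV::'n::finite set)"
  shows "matrix_inv (perm_mat \<pi> S) = perm_mat \<pi> (matrix_inv (S::real^'n^'n))"
proof -
  have "perm_mat \<pi> S ** perm_mat \<pi> (matrix_inv S) = mat 1"
    using pd_inv[OF pd] by (simp add: perm_mat_mult[OF p, symmetric] perm_mat_one[OF p])
  then show ?thesis by (rule inv_unique_right)
qed

lemma perm_pd:
  assumes pd: "pos_def_mat S" and p: "\<pi> permutes (UNIV::'n::finite set)"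
  shows "pos_def_mat (perm_mat \<pi> (S::real^'n^'n))"
  unfolding pos_def_mat_def
proof (intro conjI allI impI)
  show "transpose (perm_mat \<pi> S) = perm_mat \<pi> S"
    using pd by (simp add: perm_mat_transpose[symmetric] pos_def_mat_def)
  fix x :: "real^'n" assume x0: "x \<noteq> 0"
  define y where "y = (\<chi> a. x $ (inv \<pi> a))"
  have yx: "y $ (\<pi> i) = x $ i" for i by (simp add: y_def permutes_inverses(2)[OF p])
  have "y \<noteq> 0"
  proof
    assume "y = 0" then have "x $ i = 0" for i using yx[of i] by simp
    then show False using x0 by (simp add: vec_eq_iff)
  qed
  then have pos: "y \<bullet> (S *v y) > 0" using pd unfolding pos_def_mat_def by blast
  have inner: "(\<Sum>b\<in>UNIV. S$a$b * y$b) = (\<Sum>j\<in>UNIV. S$a$(\<pi> j) * x$j)" for a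
    by (subst sum.permute[OF p]) (simp add: comp_def yx)
  have "y \<bullet> (S *v y) = (\<Sum>a\<in>UNIV. y$a * (\<Sum>j\<in>UNIV. S$a$(\<pi> j) * x$j))"
    by (simp add: inner_vec_def matrix_vector_mult_def inner)
  also have "\<dots> = (\<Sum>i\<in>UNIV. x$i * (\<Sum>j\<in>UNIV. S$(\<pi> i)$(\<pi> j) * x$j))"
    by (subst sum.permute[OF p]) (simp add: comp_def yx)
  also have "\<dots> = x \<bullet> (perm_mat \<pi> S *v x)"
    by (simp add: inner_vec_def matrix_vector_mult_def perm_mat_def)
  finally show "x \<bullet> (perm_mat \<pi> S *v x) > 0" using pos by simp
qed

lemma LD_fact_char:
  fixes S :: "real^('p::{finite,linorder})^('p::{finite,linorder})"
  assumes pd: "pos_def_mat S" and p: "\<pi> permutes UNIV"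
  obtains U where "\<And>k. U$k$k = 1" "\<And>i k. i < k \<Longrightarrow> U$i$k = 0"
    "\<And>i k. k < i \<Longrightarrow> (perm_mat \<pi> S ** U)$i$k = 0"
    "LD_fact S \<pi> = (mat 1 - U, transpose U ** perm_mat \<pi> S ** U)"
proof -
  define G where "G = perm_mat \<pi> S"
  have Gpd: "pos_def_mat G" unfolding G_def by (rule perm_pd[OF pd p])
  have GT: "transpose G = G" using Gpd unfolding pos_def_mat_def by blast
  obtain U where U1: "\<And>k. U$k$k = 1" and U0: "\<And>i k. i < k \<Longrightarrow> U$i$k = 0"
    and Uo: "\<And>i k. k < i \<Longrightarrow> (G ** U)$i$k = 0"
    using ldl_exists[OF Gpd] by blast
  define D0 where "D0 = transpose U ** G ** U"
  have injid: "inj (id :: 'p \<Rightarrow> 'p)" by simp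
  have off: "\<And>i j. i \<noteq> j \<Longrightarrow> D0$i$j = 0"
    unfolding D0_def by (rule ldl_diag[OF injid _ _ GT]) (auto simp: U0 Uo)
  have dpos: "\<And>i. D0$i$i > 0" unfolding D0_def by (rule ldl_diag_pos[OF Gpd U1])
  have dnz: "\<And>i. D0$i$i \<noteq> 0" using dpos by (metis less_irrefl)
  have mI: "perm_mat \<pi> (matrix_inv S) = matrix_inv G"
    unfolding G_def by (rule perm_matrix_inv[OF pd p, symmetric])
  define Pr where "Pr = (\<lambda>L D. strictly_lower L \<and> pos_diag D \<and>
       perm_mat \<pi> (matrix_inv S) = (mat 1 - L) ** matrix_inv D ** transpose (mat 1 - L))"
  have P0: "Pr (mat 1 - U) D0"
  proof -
    have "strictly_lower (mat 1 - U)"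
      unfolding strictly_lower_def
    proof (intro allI impI)
      fix i j :: 'p assume "i \<le> j"
      then show "(mat 1 - U)$i$j = 0" using U0 U1 by (cases "i = j") (auto simp: mat_def)
    qed
    moreover have "pos_diag D0" unfolding pos_diag_def using off dpos by blast
    moreover have "perm_mat \<pi> (matrix_inv S) = U ** matrix_inv D0 ** transpose U"
    proof -
      have off': "\<And>i j. i \<noteq> j \<Longrightarrow> (transpose U ** G ** U)$i$j = 0"
        by (rule ldl_diag[OF injid _ _ GT]) (auto simp: U0 Uo)
      have dnz': "\<And>i. (transpose U ** G ** U)$i$i \<noteq> 0"
        using ldl_diag_pos[OF Gpd U1] by (metis less_irrefl)
      have e1: "matrix_inv D0 = dinv D0" unfolding D0_def by (rule ldl_inv(2)[OF off' dnz'])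
      have e2: "matrix_inv G = U ** dinv D0 ** transpose U" unfolding D0_def by (rule ldl_inv(1)[OF off' dnz'])
      show ?thesis by (simp only: mI e1 e2)
    qed
    ultimately show ?thesis unfolding Pr_def by simp
  qed
  have uniq: "L = mat 1 - U \<and> D = D0" if h: "Pr L D" for L D
  proof -
    define U' where "U' = mat 1 - L"
    have sl: "strictly_lower L" and pdD: "pos_diag D"
      and eq: "perm_mat \<pi> (matrix_inv S) = U' ** matrix_inv D ** transpose U'"
      using h unfolding Pr_def U'_def by auto
    have V1: "\<And>k. U'$k$k = 1" using sl unfolding strictly_lower_def U'_def by (simp add: mat_def)
    have V0: "\<And>i k. i < k \<Longrightarrow> U'$i$k = 0" using sl unfolding strictly_lower_def U'_def
      by (simp add: mat_def)
    have TD: "transpose U' ** G ** U' = D"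
      by (rule ldl_conv[OF Gpd pdD]) (use eq mI in simp)
    have Vo: "\<And>i k. k < i \<Longrightarrow> (G ** U')$i$k = 0"
      using ortho_gen[OF injid, of U' G] V1 V0 TD pdD unfolding pos_diag_def by auto
    have "U' = U" by (rule ldl_unique[OF Gpd V1 V0 Vo U1 U0 Uo])
    have "L = mat 1 - (mat 1 - L)" by simp
    also have "\<dots> = mat 1 - U" using \<open>U' = U\<close> unfolding U'_def by simp
    finally have "L = mat 1 - U" .
    moreover have "D = D0" using TD \<open>U' = U\<close> unfolding D0_def by simp
    ultimately show ?thesis by simp
  qed
  have "LD_fact S \<pi> = (mat 1 - U, D0)"
    unfolding LD_fact_def
  proof (rule the_equality)
    show "case (mat 1 - U, D0) of (L, D) \<Rightarrow> strictly_lower L \<and> pos_diag D \<and>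
       perm_mat \<pi> (matrix_inv S) = (mat 1 - L) ** matrix_inv D ** transpose (mat 1 - L)"
      using P0 unfolding Pr_def by simp
    fix x assume "case x of (L, D) \<Rightarrow> strictly_lower L \<and> pos_diag D \<and>
       perm_mat \<pi> (matrix_inv S) = (mat 1 - L) ** matrix_inv D ** transpose (mat 1 - L)"
    then show "x = (mat 1 - U, D0)" using uniq unfolding Pr_def by (cases x) auto
  qed
  then show ?thesis using that U1 U0 Uo unfolding G_def D0_def by blast
qed


lemma Btil_facts:
  fixes S :: "real^('p::{finite,linorder})^('p::{finite,linorder})"
  assumes pd: "pos_def_mat S" and p: "\<pi> permutes UNIV"
  shows "\<And>k. (mat 1 - Btil S \<pi>)$k$k = 1"
    "\<And>a b. inv \<pi> a < inv \<pi> b \<Longrightarrow> (mat 1 - Btil S \<pi>)$a$b = 0"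
    "transpose (mat 1 - Btil S \<pi>) ** S ** (mat 1 - Btil S \<pi>) = Omtil S \<pi>"
    "\<And>i j. i \<noteq> j \<Longrightarrow> Omtil S \<pi> $ i $ j = 0"
    "\<And>i. Omtil S \<pi> $ i $ i > 0"
    "\<And>a b. inv \<pi> b < inv \<pi> a \<Longrightarrow> (S ** (mat 1 - Btil S \<pi>))$a$b = 0"
proof -
  obtain U where U1: "\<And>k. U$k$k = 1" and U0: "\<And>i k. i < k \<Longrightarrow> U$i$k = 0"
    and Uo: "\<And>i k. k < i \<Longrightarrow> (perm_mat \<pi> S ** U)$i$k = 0"
    and LD: "LD_fact S \<pi> = (mat 1 - U, transpose U ** perm_mat \<pi> S ** U)"
    using LD_fact_char[OF pd p] by blast
  define G where "G = perm_mat \<pi> S"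
  have Gpd: "pos_def_mat G" unfolding G_def by (rule perm_pd[OF pd p])
  have GT: "transpose G = G" using Gpd unfolding pos_def_mat_def by blast
  have pi': "inv \<pi> permutes UNIV" using permutes_inv[OF p] .
  have injid: "inj (id :: 'p \<Rightarrow> 'p)" by simp
  have injr: "inj (inv \<pi>)" using permutes_inj[OF pi'] .
  define Ub where "Ub = mat 1 - Btil S \<pi>"
  have "Btil S \<pi> = perm_mat (inv \<pi>) (mat 1 - U)" by (simp add: Btil_def LD)
  then have UbU: "Ub = perm_mat (inv \<pi>) U"
    unfolding Ub_def by (simp add: perm_mat_diff perm_mat_one[OF pi'])
  have Ube: "Ub$a$b = U$(inv \<pi> a)$(inv \<pi> b)" for a b by (simp add: UbU perm_mat_def)
  have O: "Omtil S \<pi> = perm_mat (inv \<pi>) (transpose U ** G ** U)"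
    by (simp add: Omtil_def LD G_def)
  also have "\<dots> = transpose Ub ** S ** Ub"
    by (simp add: perm_mat_mult[OF pi'] perm_mat_transpose UbU G_def perm_mat_cancel[OF p])
  finally have O2: "transpose Ub ** S ** Ub = Omtil S \<pi>" by simp
  have off: "\<And>i j. i \<noteq> j \<Longrightarrow> (transpose U ** G ** U)$i$j = 0"
    by (rule ldl_diag[OF injid _ _ GT]) (auto simp: U0 Uo G_def)
  have dpos: "\<And>i. (transpose U ** G ** U)$i$i > 0" by (rule ldl_diag_pos[OF Gpd U1])
  have Oe: "Omtil S \<pi> $ i $ j = (transpose U ** G ** U)$(inv \<pi> i)$(inv \<pi> j)" for i j
    unfolding O by (simp add: perm_mat_def)
  show "\<And>k. (mat 1 - Btil S \<pi>)$k$k = 1" using Ube U1 unfolding Ub_def by simp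
  show "\<And>a b. inv \<pi> a < inv \<pi> b \<Longrightarrow> (mat 1 - Btil S \<pi>)$a$b = 0"
    using Ube U0 unfolding Ub_def by simp
  show "transpose (mat 1 - Btil S \<pi>) ** S ** (mat 1 - Btil S \<pi>) = Omtil S \<pi>"
    using O2 unfolding Ub_def .
  show offO: "\<And>i j. i \<noteq> j \<Longrightarrow> Omtil S \<pi> $ i $ j = 0"
  proof -
    fix i j :: 'p assume "i \<noteq> j"
    then have "inv \<pi> i \<noteq> inv \<pi> j" using injr by (meson injD)
    then show "Omtil S \<pi> $ i $ j = 0" using off Oe by simp
  qed
  show "\<And>i. Omtil S \<pi> $ i $ i > 0" using Oe dpos by simp
  show "\<And>a b. inv \<pi> b < inv \<pi> a \<Longrightarrow> (S ** (mat 1 - Btil S \<pi>))$a$b = 0"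
  proof -
    fix a b :: 'p assume ab: "inv \<pi> b < inv \<pi> a"
    have Ub1: "\<And>k. Ub$k$k = 1" using Ube U1 by simp
    have Ub0: "\<And>i k. inv \<pi> i < inv \<pi> k \<Longrightarrow> Ub$i$k = 0" using Ube U0 by simp
    have Dd: "\<And>i k. i \<noteq> k \<Longrightarrow> (transpose Ub ** S ** Ub)$i$k = 0" using O2 offO by simp
    show "(S ** (mat 1 - Btil S \<pi>))$a$b = 0"
      using ortho_gen[OF injr Ub1 Ub0 Dd ab] unfolding Ub_def .
  qed
qed

definition vcol :: "real^('p::{finite,linorder})^('p::{finite,linorder}) \<Rightarrow> (('p::{finite,linorder}) \<Rightarrow> ('p::{finite,linorder})) \<Rightarrow> ('p::{finite,linorder}) \<Rightarrow> real^('p::{finite,linorder})" where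
  "vcol S \<pi> j = column j (mat 1 - Btil S \<pi>)"

lemma vcol_nth: "vcol S \<pi> j $ i = (if i = j then 1 else 0) - Btil S \<pi> $ i $ j"
  by (simp add: vcol_def column_def mat_def)

lemma Btil_diag0:
  assumes pd: "pos_def_mat S" and p: "\<pi> permutes UNIV"
  shows "Btil S \<pi> $ j $ j = 0"
  using Btil_facts(1)[OF pd p, of j] by (simp add: mat_def)

lemma vcol_quad:
  assumes pd: "pos_def_mat S" and p: "\<pi> permutes UNIV"
  shows "vcol S \<pi> j \<bullet> (S *v vcol S \<pi> j) = Omtil S \<pi> $ j $ j"
  using Btil_facts(3)[OF pd p] col_quad[of "mat 1 - Btil S \<pi>" S j]
  unfolding vcol_def by simp

lemma vcol_orth:
  assumes pd: "pos_def_mat S" and p: "\<pi> permutes UNIV" and a: "Btil S \<pi> $ a $ j \<noteq> 0"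
  shows "(S *v vcol S \<pi> j) $ a = 0"
proof -
  have "a \<noteq> j" using a Btil_diag0[OF pd p] by auto
  then have "(mat 1 - Btil S \<pi>)$a$j \<noteq> 0" using a by (simp add: mat_def)
  then have "\<not> inv \<pi> a < inv \<pi> j" using Btil_facts(2)[OF pd p] by blast
  moreover have "inv \<pi> a \<noteq> inv \<pi> j" using \<open>a \<noteq> j\<close> permutes_inj[OF permutes_inv[OF p]] by (meson injD)
  ultimately have "inv \<pi> j < inv \<pi> a" by simp
  then show ?thesis using Btil_facts(6)[OF pd p] unfolding vcol_def col_mult by blast
qed

lemma vcol_supp_unique:
  assumes pd: "pos_def_mat S" and p: "\<pi> permutes UNIV" and p': "\<pi>' permutes UNIV"
    and T: "\<And>i. Btil S \<pi> $ i $ j \<noteq> 0 \<longleftrightarrow> Btil S \<pi>' $ i $ j \<noteq> 0"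
  shows "vcol S \<pi> j = vcol S \<pi>' j"
proof -
  define d where "d = vcol S \<pi> j - vcol S \<pi>' j"
  have d0: "Btil S \<pi> $ i $ j = 0 \<Longrightarrow> d$i = 0" for i
    using T[of i] by (simp add: d_def vcol_nth)
  have Sd: "Btil S \<pi> $ i $ j \<noteq> 0 \<Longrightarrow> (S *v d)$i = 0" for i
    using vcol_orth[OF pd p, of i j] vcol_orth[OF pd p', of i j] T[of i]
    by (simp add: d_def matrix_vector_mult_diff_distrib)
  have "d \<bullet> (S *v d) = (\<Sum>i\<in>UNIV. d$i * (S *v d)$i)" by (rule quad_sum)
  also have "\<dots> = 0" by (rule sum.neutral) (metis d0 Sd mult_zero_left mult_zero_right)
  finally have "d = 0" using pd unfolding pos_def_mat_def by (metis less_irrefl)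
  then show ?thesis by (simp add: d_def)
qed

lemma dmax_ge:
  assumes p: "\<pi> permutes (UNIV::'p::{finite,linorder} set)"
  shows "card {i. Btil S \<pi> $ i $ j \<noteq> 0} \<le> dmax S"
proof -
  have "{card {i. Btil S \<pi> $ i $ j \<noteq> 0} | \<pi> j. \<pi> permutes (UNIV :: 'p set)}
      = (\<lambda>(\<pi>, j). card {i. Btil S \<pi> $ i $ j \<noteq> 0}) ` ({\<pi>. \<pi> permutes (UNIV::'p set)} \<times> UNIV)"
    by auto
  moreover have "finite ({\<pi>. \<pi> permutes (UNIV::'p set)} \<times> (UNIV::'p set))"
    using finite_permutations[of "UNIV::'p set"] by simp
  ultimately have fin: "finite {card {i. Btil S \<pi> $ i $ j \<noteq> 0} | \<pi> j. \<pi> permutes (UNIV :: 'p set)}"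
    by simp
  show ?thesis unfolding dmax_def by (rule Max_ge[OF fin]) (use p in blast)
qed

lemma card_small_sets:
  fixes j :: "'p::finite"
  shows "card {T::'p set. j \<notin> T \<and> card T \<le> d} \<le> CARD('p) ^ d"
proof -
  define F where "F = (\<lambda>f. f ` {..<d} - {j})"
  have sub: "{T::'p set. j \<notin> T \<and> card T \<le> d} \<subseteq> F ` (PiE {..<d} (\<lambda>_. UNIV))"
  proof
    fix T :: "'p set" assume "T \<in> {T. j \<notin> T \<and> card T \<le> d}"
    then have jT: "j \<notin> T" and cT: "card T \<le> d" by auto
    show "T \<in> F ` (PiE {..<d} (\<lambda>_. UNIV))"
    proof (cases "T = {}")
      case True
      have "restrict (\<lambda>_. j) {..<d} \<in> PiE {..<d} (\<lambda>_. UNIV)" by simp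
      moreover have "F (restrict (\<lambda>_. j) {..<d}) = T" using True by (auto simp: F_def)
      ultimately show ?thesis by (metis image_eqI)
    next
      case False
      then obtain t where t: "t \<in> T" by blast
      obtain h where h: "bij_betw h {0..<card T} T" using ex_bij_betw_nat_finite[of T] by auto
      define f where "f = restrict (\<lambda>i. if i < card T then h i else t) {..<d}"
      have "f \<in> PiE {..<d} (\<lambda>_. UNIV)" by (simp add: f_def)
      moreover have "f ` {..<d} = T"
      proof
        show "f ` {..<d} \<subseteq> T" using h t bij_betwE by (fastforce simp: f_def)
        show "T \<subseteq> f ` {..<d}"
        proof
          fix x assume "x \<in> T"
          then obtain i where "i \<in> {0..<card T}" "h i = x" using h by (metis bij_betw_imp_surj_on imageE)
          then show "x \<in> f ` {..<d}" using cT by (auto simp: f_def intro!: image_eqI[of _ _ i])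
        qed
      qed
      ultimately show ?thesis using jT by (auto simp: F_def)
    qed
  qed
  have "card {T::'p set. j \<notin> T \<and> card T \<le> d} \<le> card (F ` (PiE {..<d} (\<lambda>_. UNIV)))"
    by (rule card_mono[OF _ sub]) simp
  also have "\<dots> \<le> card (PiE {..<d} (\<lambda>_. (UNIV :: 'p set)))" by (rule card_image_le, rule finite_PiE) auto
  also have "\<dots> = CARD('p) ^ d" by (simp add: card_PiE)
  finally show ?thesis .
qed

definition Vset :: "real^('p::{finite,linorder})^('p::{finite,linorder}) \<Rightarrow> ('p::{finite,linorder}) \<Rightarrow> (real^('p::{finite,linorder})) set" where
  "Vset S j = {vcol S \<pi> j | \<pi>. \<pi> permutes UNIV}"

lemma card_Vset:
  fixes S :: "real^('p::{finite,linorder})^('p::{finite,linorder})"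
  assumes pd: "pos_def_mat S"
  shows "card (Vset S j) \<le> CARD('p) ^ dmax S"
proof -
  define sp where "sp = (\<lambda>v. {i. i \<noteq> j \<and> (v$i::real) \<noteq> 0})"
  have spv: "sp (vcol S \<pi> j) = {i. Btil S \<pi> $ i $ j \<noteq> 0}" if p: "\<pi> permutes UNIV" for \<pi>
    using Btil_diag0[OF pd p, of j] by (auto simp: sp_def vcol_nth)
  have inj: "inj_on sp (Vset S j)"
  proof (rule inj_onI)
    fix v w assume "v \<in> Vset S j" "w \<in> Vset S j" and e: "sp v = sp w"
    then obtain \<pi> \<pi>' where p: "\<pi> permutes UNIV" and p': "\<pi>' permutes UNIV"
      and v: "v = vcol S \<pi> j" and w: "w = vcol S \<pi>' j" unfolding Vset_def by blast
    have "{i. Btil S \<pi> $ i $ j \<noteq> 0} = {i. Btil S \<pi>' $ i $ j \<noteq> 0}"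
      using e spv[OF p] spv[OF p'] v w by simp
    then have "\<And>i. Btil S \<pi> $ i $ j \<noteq> 0 \<longleftrightarrow> Btil S \<pi>' $ i $ j \<noteq> 0" by blast
    then show "v = w" using vcol_supp_unique[OF pd p p'] v w by blast
  qed
  have sub: "sp ` Vset S j \<subseteq> {T. j \<notin> T \<and> card T \<le> dmax S}"
  proof
    fix T assume "T \<in> sp ` Vset S j"
    then obtain \<pi> where p: "\<pi> permutes UNIV" and T: "T = sp (vcol S \<pi> j)"
      unfolding Vset_def by blast
    then have "card T \<le> dmax S" using spv[OF p] dmax_ge[OF p, of S j] by simp
    moreover have "j \<notin> T" using T by (simp add: sp_def)
    ultimately show "T \<in> {T. j \<notin> T \<and> card T \<le> dmax S}" by simp
  qed
  have "card (Vset S j) = card (sp ` Vset S j)" using card_image[OF inj] by simp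
  also have "\<dots> \<le> card {T::'p set. j \<notin> T \<and> card T \<le> dmax S}" by (rule card_mono[OF _ sub]) simp
  also have "\<dots> \<le> CARD('p) ^ dmax S" by (rule card_small_sets)
  finally show ?thesis .
qed

lemma row_loss: "(x - x v* B) $ j = x \<bullet> column j (mat 1 - B)"
  by (simp add: vector_matrix_mult_def inner_vec_def column_def mat_def right_diff_distrib
      sum_subtractf if_distrib[of "\<lambda>t. _ * t"] cong: if_cong)

lemma norm_sq_sum: "(norm (x::real^'p::finite))\<^sup>2 = (\<Sum>j\<in>UNIV. (x$j)\<^sup>2)"
  unfolding power2_norm_eq_inner by (simp add: inner_vec_def power2_eq_square)

lemma lossF_vcol:
  "lossF n X (Btil S \<pi>) = (1 / (2 * real n)) * (\<Sum>j\<in>UNIV. \<Sum>i<n. (X i \<bullet> vcol S \<pi> j)\<^sup>2)"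
  unfolding lossF_def norm_sq_sum row_loss vcol_def by (simp add: sum.swap[of _ "{..<n}"])


lemma shear_nn:
  fixes f :: "real^('n::finite) \<Rightarrow> ennreal" and c :: "real^'n \<Rightarrow> real" and m :: 'n
  assumes f[measurable]: "f \<in> borel_measurable borel" and c[measurable]: "c \<in> borel_measurable borel"
    and cind: "\<And>x t. c (x + t *\<^sub>R axis m 1) = c x"
  shows "(\<integral>\<^sup>+x. f (x + c x *\<^sub>R axis m 1) \<partial>lborel) = (\<integral>\<^sup>+x. f x \<partial>lborel)"
proof -
  interpret P: product_sigma_finite "\<lambda>_::real^'n. (lborel :: real measure)" by standard
  define e :: "real^'n" where "e = axis m 1"
  have eB: "e \<in> Basis" by (simp add: e_def)
  define B' where "B' = (Basis :: (real^'n) set) - {e}"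
  have BB: "(Basis :: (real^'n) set) = insert e B'" using eB by (auto simp: B'_def)
  have finB': "finite B'" by (simp add: B'_def)
  have eB': "e \<notin> B'" by (simp add: B'_def)
  define \<Phi> where "\<Phi> = (\<lambda>F::real^'n \<Rightarrow> real. \<Sum>b\<in>Basis. F b *\<^sub>R b)"
  have \<Phi>m[measurable]: "\<Phi> \<in> borel_measurable (PiM Basis (\<lambda>_. lborel))"
    unfolding \<Phi>_def by measurable
  have \<Phi>upd: "\<Phi> (G(e := y)) = (\<Sum>b\<in>B'. G b *\<^sub>R b) + y *\<^sub>R e" for G y
  proof -
    have "\<Phi> (G(e := y)) = (\<Sum>b\<in>insert e B'. (G(e := y)) b *\<^sub>R b)" unfolding \<Phi>_def BB ..
    also have "\<dots> = y *\<^sub>R e + (\<Sum>b\<in>B'. (G(e := y)) b *\<^sub>R b)" using finB' eB' by simp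
    also have "(\<Sum>b\<in>B'. (G(e := y)) b *\<^sub>R b) = (\<Sum>b\<in>B'. G b *\<^sub>R b)"
      by (rule sum.cong) (use eB' in auto)
    finally show ?thesis by (simp only: add.commute)
  qed
  have key: "\<And>h. h \<in> borel_measurable borel \<Longrightarrow>
      (\<integral>\<^sup>+x. h x \<partial>lborel) = (\<integral>\<^sup>+G. (\<integral>\<^sup>+y. h ((\<Sum>b\<in>B'. G b *\<^sub>R b) + y *\<^sub>R e) \<partial>lborel) \<partial>PiM B' (\<lambda>_. lborel))"
  proof -
    fix h :: "real^'n \<Rightarrow> ennreal" assume hm[measurable]: "h \<in> borel_measurable borel"
    have "(\<integral>\<^sup>+x. h x \<partial>lborel) = (\<integral>\<^sup>+F. h (\<Phi> F) \<partial>PiM Basis (\<lambda>_. lborel))"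
      unfolding \<Phi>_def by (subst lborel_eq) (simp add: nn_integral_distr)
    also have "\<dots> = (\<integral>\<^sup>+F. h (\<Phi> F) \<partial>PiM (insert e B') (\<lambda>_. lborel))" by (simp add: BB)
    also have "\<dots> = (\<integral>\<^sup>+G. (\<integral>\<^sup>+y. h (\<Phi> (G(e := y))) \<partial>lborel) \<partial>PiM B' (\<lambda>_. lborel))"
      by (rule P.product_nn_integral_insert[OF finB' eB']) (use \<Phi>m BB in simp)
    also have "\<dots> = (\<integral>\<^sup>+G. (\<integral>\<^sup>+y. h ((\<Sum>b\<in>B'. G b *\<^sub>R b) + y *\<^sub>R e) \<partial>lborel) \<partial>PiM B' (\<lambda>_. lborel))"
      by (simp add: \<Phi>upd)
    finally show "(\<integral>\<^sup>+x. h x \<partial>lborel) = (\<integral>\<^sup>+G. (\<integral>\<^sup>+y. h ((\<Sum>b\<in>B'. G b *\<^sub>R b) + y *\<^sub>R e) \<partial>lborel) \<partial>PiM B' (\<lambda>_. lborel))" .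
  qed
  have inner: "(\<integral>\<^sup>+y. f ((w + y *\<^sub>R e) + c (w + y *\<^sub>R e) *\<^sub>R e) \<partial>lborel) = (\<integral>\<^sup>+y. f (w + y *\<^sub>R e) \<partial>lborel)" for w
  proof -
    have "(\<integral>\<^sup>+y. f ((w + y *\<^sub>R e) + c (w + y *\<^sub>R e) *\<^sub>R e) \<partial>lborel)
        = (\<integral>\<^sup>+y. f (w + (c w + 1 * y) *\<^sub>R e) \<partial>lborel)"
      using cind by (simp add: e_def scaleR_add_left algebra_simps)
    also have "\<dots> = (\<integral>\<^sup>+y. f (w + y *\<^sub>R e) \<partial>lborel)"
    proof -
      have m: "(\<lambda>y. f (w + y *\<^sub>R e)) \<in> borel_measurable borel" by measurable
      show ?thesis using nn_integral_real_affine[OF m, of 1 "c w"] by simp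
    qed
    finally show ?thesis .
  qed
  have "(\<integral>\<^sup>+x. f (x + c x *\<^sub>R axis m 1) \<partial>lborel)
      = (\<integral>\<^sup>+G. (\<integral>\<^sup>+y. f (((\<Sum>b\<in>B'. G b *\<^sub>R b) + y *\<^sub>R e) + c ((\<Sum>b\<in>B'. G b *\<^sub>R b) + y *\<^sub>R e) *\<^sub>R e) \<partial>lborel) \<partial>PiM B' (\<lambda>_. lborel))"
    unfolding e_def[symmetric] by (rule key[of "\<lambda>x. f (x + c x *\<^sub>R e)"]) measurable
  also have "\<dots> = (\<integral>\<^sup>+G. (\<integral>\<^sup>+y. f ((\<Sum>b\<in>B'. G b *\<^sub>R b) + y *\<^sub>R e) \<partial>lborel) \<partial>PiM B' (\<lambda>_. lborel))"
    by (simp add: inner)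
  also have "\<dots> = (\<integral>\<^sup>+x. f x \<partial>lborel)" by (rule key[of f, symmetric]) simp
  finally show ?thesis .
qed


lemma shear_all:
  fixes U :: "real^('n::finite)^('n::finite)" and r :: "'n \<Rightarrow> 'b::linorder"
    and f :: "real^'n \<Rightarrow> ennreal"
  assumes r: "inj r" and U1: "\<And>k. U$k$k = 1" and U0: "\<And>i k. r i < r k \<Longrightarrow> U$i$k = 0"
    and f: "f \<in> borel_measurable borel"
  shows "(\<integral>\<^sup>+x. f (transpose U *v x) \<partial>lborel) = (\<integral>\<^sup>+x. f x \<partial>lborel)"
proof -
  define Fm where "Fm = (\<lambda>J x. (\<chi> k. if k \<in> J then (transpose U *v x)$k else (x::real^'n)$k))"
  have Fm_meas: "Fm J \<in> borel_measurable borel" for J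
    unfolding Fm_def by (intro borel_measurable_continuous_onI linear_continuous_on bounded_linearI')
      (auto simp: vec_eq_iff matrix_vector_mult_def algebra_simps sum.distrib sum_distrib_left)
  have claim: "\<forall>g. g \<in> borel_measurable borel \<longrightarrow>
      (\<integral>\<^sup>+x. g (Fm J x) \<partial>lborel) = (\<integral>\<^sup>+x. g x \<partial>lborel)" for J
  proof -
    have "finite J" by simp
    then show ?thesis
    proof (induction J rule: finite_ranking_induct[where f=r])
      case empty
      have "Fm {} x = x" for x by (simp add: Fm_def vec_eq_iff)
      then show ?case by simp
    next
      case (insert m J)
      show ?case
      proof (cases "m \<in> J")
        case True
        then show ?thesis using insert.IH by (simp add: insert_absorb)
      next
        case mJ: False
        define c where "c = (\<lambda>z::real^'n. \<Sum>i\<in>UNIV - {m}. U$i$m * z$i)"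
        define T where "T = (\<lambda>z. z + c z *\<^sub>R axis m (1::real))"
        have cm[measurable]: "c \<in> borel_measurable borel"
          unfolding c_def by measurable
        have Tm[measurable]: "T \<in> borel_measurable borel" unfolding T_def by measurable
        have cind: "c (x + t *\<^sub>R axis m 1) = c x" for x t
          unfolding c_def by (intro sum.cong) (auto simp: axis_def)
        have trans_m: "(transpose U *v z)$m = z$m + c z" for z
        proof -
          have "(transpose U *v z)$m = (\<Sum>i\<in>UNIV. U$i$m * z$i)"
            by (simp add: matrix_vector_mult_def transpose_def)
          also have "\<dots> = U$m$m * z$m + (\<Sum>i\<in>UNIV - {m}. U$i$m * z$i)"
            by (subst sum.remove[of _ m]) auto
          finally show ?thesis using U1 by (simp add: c_def)
        qed
        have cF: "c (Fm J x) = c x" for x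
          unfolding c_def
        proof (intro sum.cong refl)
          fix i assume "i \<in> UNIV - {m}"
          then have im: "i \<noteq> m" by simp
          show "U$i$m * Fm J x $ i = U$i$m * x$i"
          proof (cases "U$i$m = 0")
            case False
            then have "\<not> r i < r m" using U0 by blast
            moreover have "r i \<noteq> r m" using im r by (meson injD)
            ultimately have "r m < r i" by simp
            then have "i \<notin> J" using insert.hyps(2) by (meson not_le)
            then show ?thesis by (simp add: Fm_def)
          qed simp
        qed
        have Fins: "Fm (insert m J) x = T (Fm J x)" for x
        proof -
          have "Fm (insert m J) x $ k = T (Fm J x) $ k" for k
          proof (cases "k = m")
            case True
            have "T (Fm J x) $ m = Fm J x $ m + c (Fm J x)" by (simp add: T_def axis_def)
            also have "\<dots> = x$m + c x" by (simp only: cF) (simp add: Fm_def mJ)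
            also have "\<dots> = (transpose U *v x)$m" by (rule trans_m[symmetric])
            also have "\<dots> = Fm (insert m J) x $ m" by (simp add: Fm_def)
            finally show ?thesis using True by simp
          next
            case False
            then show ?thesis by (simp add: Fm_def T_def axis_def)
          qed
          then show ?thesis by (simp add: vec_eq_iff)
        qed
        show ?thesis
        proof (intro allI impI)
          fix g :: "real^'n \<Rightarrow> ennreal" assume gm[measurable]: "g \<in> borel_measurable borel"
          have gT: "(\<lambda>z. g (T z)) \<in> borel_measurable borel" by measurable
          have "(\<integral>\<^sup>+x. g (Fm (insert m J) x) \<partial>lborel) = (\<integral>\<^sup>+x. (\<lambda>z. g (T z)) (Fm J x) \<partial>lborel)"
            by (simp add: Fins)
          also have "\<dots> = (\<integral>\<^sup>+x. g (T x) \<partial>lborel)" using insert.IH gT by blast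
          also have "\<dots> = (\<integral>\<^sup>+x. g x \<partial>lborel)" unfolding T_def by (rule shear_nn[OF gm cm cind])
          finally show "(\<integral>\<^sup>+x. g (Fm (insert m J) x) \<partial>lborel) = (\<integral>\<^sup>+x. g x \<partial>lborel)" .
        qed
      qed
    qed
  qed
  have "Fm UNIV x = transpose U *v x" for x by (simp add: Fm_def vec_eq_iff)
  then show ?thesis using claim[of UNIV] f by simp
qed

lemma Basis_vec_axis: "(Basis :: (real^('n::finite)) set) = (\<lambda>k. axis k 1) ` UNIV"
  by (auto simp: Basis_vec_def)

lemma nn_integral_prod_coords:
  fixes F :: "'n::finite \<Rightarrow> real \<Rightarrow> ennreal"
  assumes Fm[measurable]: "\<And>k. F k \<in> borel_measurable borel"
  shows "(\<integral>\<^sup>+x. (\<Prod>k\<in>UNIV. F k (x$k)) \<partial>(lborel::(real^'n) measure)) = (\<Prod>k\<in>UNIV. \<integral>\<^sup>+t. F k t \<partial>lborel)"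
proof -
  define kof where "kof = (\<lambda>b::real^'n. SOME k. b = axis k 1)"
  have kofa: "kof (axis k 1) = k" for k
    unfolding kof_def by (rule some_equality) (auto simp: axis_eq_axis)
  have inj: "inj (\<lambda>k::'n. axis k (1::real))" by (auto simp: inj_def axis_eq_axis)
  have reix: "(\<Prod>b\<in>Basis. h b) = (\<Prod>k\<in>UNIV. h (axis k 1))" for h :: "real^'n \<Rightarrow> ennreal"
    unfolding Basis_vec_axis by (subst prod.reindex[OF inj]) (simp add: comp_def)
  have "(\<integral>\<^sup>+x. (\<Prod>b\<in>Basis. F (kof b) (x \<bullet> b)) \<partial>(lborel::(real^'n) measure)) = (\<Prod>b\<in>Basis. \<integral>\<^sup>+t. F (kof b) t \<partial>lborel)"
    by (rule nn_integral_lborel_prod) auto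
  then show ?thesis unfolding reix by (simp add: kofa inner_axis)
qed


lemma inner_mat: "x \<bullet> (A *v w) = (transpose A *v x) \<bullet> (w::real^'n::finite)"
proof -
  have "x \<bullet> (A *v w) = (\<Sum>i\<in>UNIV. \<Sum>k\<in>UNIV. x$i * A$i$k * w$k)"
    by (simp add: inner_vec_def matrix_vector_mult_def sum_distrib_left mult.assoc)
  also have "\<dots> = (\<Sum>k\<in>UNIV. \<Sum>i\<in>UNIV. x$i * A$i$k * w$k)" by (rule sum.swap)
  also have "\<dots> = (transpose A *v x) \<bullet> w"
    by (simp add: inner_vec_def matrix_vector_mult_def transpose_def sum_distrib_left mult.commute mult.left_commute)
  finally show ?thesis .
qed

lemma quad_ldl:
  fixes S U :: "real^('n::finite)^('n::finite)"
  assumes off: "\<And>i j. i \<noteq> j \<Longrightarrow> (transpose U ** S ** U)$i$j = 0"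
    and dnz: "\<And>i. (transpose U ** S ** U)$i$i \<noteq> 0"
  shows "x \<bullet> (matrix_inv S *v x) = (\<Sum>k\<in>UNIV. ((transpose U *v x)$k)\<^sup>2 / (transpose U ** S ** U)$k$k)"
proof -
  define D where "D = transpose U ** S ** U"
  define z where "z = transpose U *v x"
  have mi: "matrix_inv S = U ** dinv D ** transpose U" unfolding D_def by (rule ldl_inv(1)[OF off dnz])
  have "x \<bullet> (matrix_inv S *v x) = x \<bullet> (U *v (dinv D *v z))"
    by (simp only: mi z_def matrix_vector_mul_assoc matrix_mul_assoc)
  also have "\<dots> = z \<bullet> (dinv D *v z)" unfolding inner_mat z_def ..
  also have "\<dots> = (\<Sum>k\<in>UNIV. z$k * (z$k / D$k$k))"
  proof -
    have "(dinv D *v z)$k = z$k / D$k$k" for k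
    proof -
      have "(dinv D *v z)$k = (\<Sum>j\<in>UNIV. (if k = j then 1 / D$k$k else 0) * z$j)"
        by (simp add: matrix_vector_mult_def dinv_def)
      also have "\<dots> = z$k / D$k$k" by (simp add: if_distrib[of "\<lambda>t. t * _"] cong: if_cong)
      finally show ?thesis .
    qed
    then show ?thesis by (simp add: inner_vec_def)
  qed
  also have "\<dots> = (\<Sum>k\<in>UNIV. (z$k)\<^sup>2 / D$k$k)" by (simp add: power2_eq_square)
  finally show ?thesis unfolding D_def z_def .
qed

lemma nn_integral_normal:
  assumes "\<sigma> > 0" shows "(\<integral>\<^sup>+t. ennreal (normal_density \<mu> \<sigma> t) \<partial>lborel) = 1"
  by (subst nn_integral_eq_integral[OF integrable_normal_density[OF assms]])
    (auto simp: integral_normal_density[OF assms])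

lemma gauss_factor:
  fixes S U :: "real^('n::finite)^('n::finite)"
  assumes off: "\<And>i j. i \<noteq> j \<Longrightarrow> (transpose U ** S ** U)$i$j = 0"
    and dpos: "\<And>i. (transpose U ** S ** U)$i$i > 0"
  shows "gauss_density S x = ((2 * pi) powr (- real CARD('n) / 2) * det S powr (-1/2) *
      (\<Prod>k\<in>UNIV. sqrt (2 * pi * (transpose U ** S ** U)$k$k))) *
      (\<Prod>k\<in>UNIV. normal_density 0 (sqrt ((transpose U ** S ** U)$k$k)) ((transpose U *v x)$k))"
proof -
  define D where "D = transpose U ** S ** U"
  define z where "z = transpose U *v x"
  have dnz: "\<And>i. D$i$i \<noteq> 0" using dpos unfolding D_def by (metis less_irrefl)
  have Dp: "\<And>i. D$i$i > 0" using dpos unfolding D_def .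
  have q: "x \<bullet> (matrix_inv S *v x) = (\<Sum>k\<in>UNIV. (z$k)\<^sup>2 / D$k$k)"
    unfolding D_def z_def by (rule quad_ldl[OF off dnz[unfolded D_def]])
  have nd: "normal_density 0 (sqrt (D$k$k)) t = (1 / sqrt (2 * pi * D$k$k)) * exp (- (t\<^sup>2 / D$k$k) / 2)" for k t
    using Dp[of k] by (simp add: normal_density_def)
  have "(\<Prod>k\<in>UNIV. sqrt (2 * pi * D$k$k)) * (\<Prod>k\<in>UNIV. normal_density 0 (sqrt (D$k$k)) (z$k))
      = (\<Prod>k\<in>UNIV. sqrt (2 * pi * D$k$k) * normal_density 0 (sqrt (D$k$k)) (z$k))"
    by (simp add: prod.distrib)
  also have "\<dots> = (\<Prod>k\<in>UNIV. exp (- ((z$k)\<^sup>2 / D$k$k) / 2))"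
  proof (rule prod.cong[OF refl])
    fix k
    have "sqrt (2 * pi * D$k$k) > 0" using Dp[of k] by simp
    then show "sqrt (2 * pi * D$k$k) * normal_density 0 (sqrt (D$k$k)) (z$k) = exp (- ((z$k)\<^sup>2 / D$k$k) / 2)"
      unfolding nd using dnz[of k] by simp
  qed
  also have "\<dots> = exp (\<Sum>k\<in>UNIV. - ((z$k)\<^sup>2 / D$k$k) / 2)" by (simp add: exp_sum)
  also have "\<dots> = exp (- (x \<bullet> (matrix_inv S *v x)) / 2)"
    unfolding q by (simp add: sum_negf sum_divide_distrib)
  finally have e: "(\<Prod>k\<in>UNIV. sqrt (2 * pi * D$k$k)) * (\<Prod>k\<in>UNIV. normal_density 0 (sqrt (D$k$k)) (z$k))
      = exp (- (x \<bullet> (matrix_inv S *v x)) / 2)" .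
  show ?thesis unfolding gauss_density_def D_def[symmetric] z_def[symmetric]
    using e by (simp add: mult.assoc)
qed


lemma shear_prod:
  fixes U :: "real^('n::finite)^('n::finite)" and r :: "'n \<Rightarrow> 'b::linorder"
    and F :: "'n \<Rightarrow> real \<Rightarrow> ennreal"
  assumes r: "inj r" and U1: "\<And>k. U$k$k = 1" and U0: "\<And>i k. r i < r k \<Longrightarrow> U$i$k = 0"
    and Fm[measurable]: "\<And>k. F k \<in> borel_measurable borel"
  shows "(\<integral>\<^sup>+x. (\<Prod>k\<in>UNIV. F k ((transpose U *v x)$k)) \<partial>lborel) = (\<Prod>k\<in>UNIV. \<integral>\<^sup>+t. F k t \<partial>lborel)"
proof -
  have m: "(\<lambda>z::real^'n. \<Prod>k\<in>UNIV. F k (z$k)) \<in> borel_measurable borel" by measurable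
  have "(\<integral>\<^sup>+x. (\<Prod>k\<in>UNIV. F k ((transpose U *v x)$k)) \<partial>lborel) = (\<integral>\<^sup>+z. (\<Prod>k\<in>UNIV. F k (z$k)) \<partial>lborel)"
    using shear_all[OF r U1 U0 m] by simp
  also have "\<dots> = (\<Prod>k\<in>UNIV. \<integral>\<^sup>+t. F k t \<partial>lborel)" by (rule nn_integral_prod_coords[OF Fm])
  finally show ?thesis .
qed

lemma mv_comp_eq: "(A *v x) $ k = x \<bullet> row k (A::real^('n::finite)^'m)"
  by (simp add: matrix_vector_mult_def inner_vec_def row_def mult.commute)

lemma mv_meas[measurable]: "(\<lambda>x. (A *v x) $ k) \<in> borel_measurable (borel :: (real^('n::finite)) measure)"
  unfolding mv_comp_eq by measurable

lemma gauss_marginal: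
  fixes S U :: "real^('n::finite)^('n::finite)" and r :: "'n \<Rightarrow> 'b::linorder"
    and g :: "real \<Rightarrow> ennreal"
  assumes r: "inj r" and U1: "\<And>k. U$k$k = 1" and U0: "\<And>i k. r i < r k \<Longrightarrow> U$i$k = 0"
    and off: "\<And>i j. i \<noteq> j \<Longrightarrow> (transpose U ** S ** U)$i$j = 0"
    and dpos: "\<And>i. (transpose U ** S ** U)$i$i > 0"
    and norm: "(\<integral>\<^sup>+x. ennreal (gauss_density S x) \<partial>lborel) = 1"
    and gm[measurable]: "g \<in> borel_measurable borel"
  shows "(\<integral>\<^sup>+x. g ((transpose U *v x)$j) * ennreal (gauss_density S x) \<partial>lborel)
       = (\<integral>\<^sup>+t. g t * ennreal (normal_density 0 (sqrt ((transpose U ** S ** U)$j$j)) t) \<partial>lborel)"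
proof -
  define D where "D = transpose U ** S ** U"
  define nd where "nd = (\<lambda>k t. normal_density 0 (sqrt (D$k$k)) t)"
  define \<kappa> where "\<kappa> = (2 * pi) powr (- real CARD('n) / 2) * det S powr (-1/2) *
      (\<Prod>k\<in>UNIV. sqrt (2 * pi * D$k$k))"
  have ndm[measurable]: "\<And>k. nd k \<in> borel_measurable borel" unfolding nd_def by measurable
  have sp: "\<And>k. sqrt (D$k$k) > 0" using dpos unfolding D_def by simp
  have Dnn: "\<And>k. 0 \<le> D$k$k" using dpos unfolding D_def by (simp add: less_imp_le)
  have k0: "\<kappa> \<ge> 0" unfolding \<kappa>_def by (intro mult_nonneg_nonneg prod_nonneg) (auto simp: Dnn)
  have gf: "gauss_density S x = \<kappa> * (\<Prod>k\<in>UNIV. nd k ((transpose U *v x)$k))" for x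
    unfolding \<kappa>_def nd_def D_def by (rule gauss_factor[OF off dpos])
  have egf: "ennreal (gauss_density S x) = ennreal \<kappa> * (\<Prod>k\<in>UNIV. ennreal (nd k ((transpose U *v x)$k)))" for x
    unfolding gf using k0 by (simp add: ennreal_mult prod_ennreal nd_def normal_density_nonneg prod_nonneg)
  have int1: "(\<integral>\<^sup>+t. ennreal (nd k t) \<partial>lborel) = 1" for k
    unfolding nd_def by (rule nn_integral_normal[OF sp])
  have "(\<integral>\<^sup>+x. ennreal (gauss_density S x) \<partial>lborel)
      = ennreal \<kappa> * (\<integral>\<^sup>+x. (\<Prod>k\<in>UNIV. ennreal (nd k ((transpose U *v x)$k))) \<partial>lborel)"
    unfolding egf by (rule nn_integral_cmult) measurable
  also have "\<dots> = ennreal \<kappa> * (\<Prod>k\<in>UNIV. \<integral>\<^sup>+t. ennreal (nd k t) \<partial>lborel)"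
    by (subst shear_prod[OF r U1 U0, of "\<lambda>k t. ennreal (nd k t)"]) auto
  also have "\<dots> = ennreal \<kappa>" by (simp add: int1)
  finally have "ennreal \<kappa> = 1" using norm by simp
  then have k1: "\<kappa> = 1" using k0 by simp
  define F where "F = (\<lambda>k t. (if k = j then g t else 1) * ennreal (nd k t))"
  have Fm[measurable]: "\<And>k. F k \<in> borel_measurable borel" unfolding F_def by measurable
  have lhs: "g ((transpose U *v x)$j) * ennreal (gauss_density S x) = (\<Prod>k\<in>UNIV. F k ((transpose U *v x)$k))" for x
  proof -
    have "(\<Prod>k\<in>UNIV. F k ((transpose U *v x)$k)) =
        (\<Prod>k\<in>UNIV. (if k = j then g ((transpose U *v x)$k) else 1)) * (\<Prod>k\<in>UNIV. ennreal (nd k ((transpose U *v x)$k)))"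
      unfolding F_def by (rule prod.distrib)
    also have "(\<Prod>k\<in>UNIV. (if k = j then g ((transpose U *v x)$k) else 1)) = g ((transpose U *v x)$j)"
      by (simp add: prod.delta)
    finally show ?thesis using egf[of x] k1 by simp
  qed
  have intF: "(\<integral>\<^sup>+t. F k t \<partial>lborel) = (if k = j then (\<integral>\<^sup>+t. g t * ennreal (nd j t) \<partial>lborel) else 1)" for k
    by (cases "k = j") (simp_all add: F_def int1)
  have "(\<integral>\<^sup>+x. g ((transpose U *v x)$j) * ennreal (gauss_density S x) \<partial>lborel)
      = (\<integral>\<^sup>+x. (\<Prod>k\<in>UNIV. F k ((transpose U *v x)$k)) \<partial>lborel)" by (simp only: lhs)
  also have "\<dots> = (\<Prod>k\<in>UNIV. \<integral>\<^sup>+t. F k t \<partial>lborel)" by (rule shear_prod[OF r U1 U0 Fm])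
  also have "\<dots> = (\<integral>\<^sup>+t. g t * ennreal (nd j t) \<partial>lborel)" unfolding intF by (simp add: prod.delta)
  finally show ?thesis unfolding nd_def D_def .
qed

lemma normal_sq_pointwise:
  fixes \<sigma> \<mu> t :: real
  assumes s: "\<sigma> > 0" and a: "1 - 2 * \<mu> * \<sigma>\<^sup>2 > 0"
  shows "exp (\<mu> * t\<^sup>2) * normal_density 0 \<sigma> t
       = (1 / sqrt (1 - 2 * \<mu> * \<sigma>\<^sup>2)) * normal_density 0 (\<sigma> / sqrt (1 - 2 * \<mu> * \<sigma>\<^sup>2)) t"
proof -
  define a where "a = 1 - 2 * \<mu> * \<sigma>\<^sup>2"
  have ap: "a > 0" using a by (simp add: a_def)
  have s2: "(\<sigma> / sqrt a)\<^sup>2 = \<sigma>\<^sup>2 / a" using ap by (simp add: power_divide)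
  have s2p: "\<sigma>\<^sup>2 > 0" using s by simp
  have e1: "- (t - 0)\<^sup>2 / (2 * (\<sigma> / sqrt a)\<^sup>2) = - (t - 0)\<^sup>2 / (2 * \<sigma>\<^sup>2) + \<mu> * t\<^sup>2"
    unfolding s2 using ap s2p by (simp add: a_def field_simps)
  have e2: "sqrt (2 * pi * (\<sigma> / sqrt a)\<^sup>2) = sqrt (2 * pi * \<sigma>\<^sup>2) / sqrt a"
    unfolding s2 using ap by (simp add: real_sqrt_divide real_sqrt_mult)
  have sa: "sqrt a > 0" using ap by simp
  have "(1 / sqrt a) * normal_density 0 (\<sigma> / sqrt a) t
      = (1 / sqrt a) * (sqrt a / sqrt (2 * pi * \<sigma>\<^sup>2)) * exp (- (t - 0)\<^sup>2 / (2 * \<sigma>\<^sup>2) + \<mu> * t\<^sup>2)"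
    unfolding normal_density_def e1 e2 by simp
  also have "\<dots> = (1 / sqrt (2 * pi * \<sigma>\<^sup>2)) * (exp (- (t - 0)\<^sup>2 / (2 * \<sigma>\<^sup>2)) * exp (\<mu> * t\<^sup>2))"
  proof -
    have c1: "(1 / sqrt a) * (sqrt a / sqrt (2 * pi * \<sigma>\<^sup>2)) = 1 / sqrt (2 * pi * \<sigma>\<^sup>2)" using sa by simp
    have c2: "exp (- (t - 0)\<^sup>2 / (2 * \<sigma>\<^sup>2) + \<mu> * t\<^sup>2) = exp (- (t - 0)\<^sup>2 / (2 * \<sigma>\<^sup>2)) * exp (\<mu> * t\<^sup>2)"
      by (rule exp_add)
    show ?thesis by (simp only: c1 c2)
  qed
  also have "\<dots> = exp (\<mu> * t\<^sup>2) * normal_density 0 \<sigma> t" by (simp only: normal_density_def ac_simps)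
  finally show ?thesis unfolding a_def by simp
qed

lemma normal_mgf_sq:
  fixes \<sigma> \<mu> :: real
  assumes s: "\<sigma> > 0" and a: "1 - 2 * \<mu> * \<sigma>\<^sup>2 > 0"
  shows "(\<integral>\<^sup>+t. ennreal (exp (\<mu> * t\<^sup>2)) * ennreal (normal_density 0 \<sigma> t) \<partial>lborel)
       = ennreal (1 / sqrt (1 - 2 * \<mu> * \<sigma>\<^sup>2))"
proof -
  define a where "a = 1 - 2 * \<mu> * \<sigma>\<^sup>2"
  have ap: "a > 0" using a by (simp add: a_def)
  have s': "\<sigma> / sqrt a > 0" using s ap by simp
  have "(\<integral>\<^sup>+t. ennreal (exp (\<mu> * t\<^sup>2)) * ennreal (normal_density 0 \<sigma> t) \<partial>lborel)
      = (\<integral>\<^sup>+t. ennreal (1 / sqrt a) * ennreal (normal_density 0 (\<sigma> / sqrt a) t) \<partial>lborel)"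
  proof (rule nn_integral_cong)
    fix t
    have "ennreal (exp (\<mu> * t\<^sup>2)) * ennreal (normal_density 0 \<sigma> t) = ennreal (exp (\<mu> * t\<^sup>2) * normal_density 0 \<sigma> t)"
      by (simp add: ennreal_mult normal_density_nonneg)
    also have "\<dots> = ennreal ((1 / sqrt a) * normal_density 0 (\<sigma> / sqrt a) t)"
      using normal_sq_pointwise[OF s a, of t] unfolding a_def by simp
    also have "\<dots> = ennreal (1 / sqrt a) * ennreal (normal_density 0 (\<sigma> / sqrt a) t)"
      using ap by (subst ennreal_mult[symmetric]) (auto simp: normal_density_nonneg)
    finally show "ennreal (exp (\<mu> * t\<^sup>2)) * ennreal (normal_density 0 \<sigma> t) = ennreal (1 / sqrt a) * ennreal (normal_density 0 (\<sigma> / sqrt a) t)" .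
  qed
  also have "\<dots> = ennreal (1 / sqrt a) * (\<integral>\<^sup>+t. ennreal (normal_density 0 (\<sigma> / sqrt a) t) \<partial>lborel)"
    by (rule nn_integral_cmult) measurable
  also have "\<dots> = ennreal (1 / sqrt a)" using nn_integral_normal[OF s'] by simp
  finally show ?thesis unfolding a_def .
qed

lemma vcol_trans: "(transpose (mat 1 - B) *v x) $ j = x \<bullet> column j (mat 1 - B)"
  by (simp add: matrix_vector_mult_def transpose_def inner_vec_def column_def mult.commute)

lemma row_mgf:
  fixes S :: "real^('p::{finite,linorder})^('p::{finite,linorder})" and Xi :: "'w \<Rightarrow> real^('p::{finite,linorder})"
  assumes M: "prob_space M" and pd: "pos_def_mat S" and p: "\<pi> permutes UNIV"
    and dist: "distributed M lborel Xi (\<lambda>x. ennreal (gauss_density S x))"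
    and a: "1 - 2 * \<mu> * Omtil S \<pi> $ j $ j > 0"
  shows "(\<integral>\<^sup>+\<omega>. ennreal (exp (\<mu> * (Xi \<omega> \<bullet> vcol S \<pi> j)\<^sup>2)) \<partial>M) = ennreal (1 / sqrt (1 - 2 * \<mu> * Omtil S \<pi> $ j $ j))"
proof -
  define U where "U = mat 1 - Btil S \<pi>"
  have injr: "inj (inv \<pi>)" using permutes_inj[OF permutes_inv[OF p]] .
  note BF = Btil_facts[OF pd p, folded U_def]
  have off: "\<And>i j. i \<noteq> j \<Longrightarrow> (transpose U ** S ** U)$i$j = 0" using BF(3,4) by simp
  have dpos: "\<And>i. (transpose U ** S ** U)$i$i > 0" using BF(3,5) by simp
  have one: "(\<integral>\<^sup>+x. ennreal (gauss_density S x) \<partial>lborel) = 1"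
  proof -
    have "(\<integral>\<^sup>+x. ennreal (gauss_density S x) * 1 \<partial>lborel) = (\<integral>\<^sup>+\<omega>. 1 \<partial>M)"
      by (rule distributed_nn_integral[OF dist]) simp
    also have "\<dots> = 1" using M by (simp add: prob_space.emeasure_space_1)
    finally show ?thesis by simp
  qed
  have gm: "(\<lambda>t. ennreal (exp (\<mu> * t\<^sup>2))) \<in> borel_measurable borel" by measurable
  define w where "w = vcol S \<pi> j"
  have hm: "(\<lambda>x. ennreal (exp (\<mu> * (x \<bullet> w)\<^sup>2))) \<in> borel_measurable lborel" by measurable
  have xw: "x \<bullet> w = (transpose U *v x)$j" for x by (simp only: w_def vcol_def U_def vcol_trans)
  have "(\<integral>\<^sup>+\<omega>. ennreal (exp (\<mu> * (Xi \<omega> \<bullet> vcol S \<pi> j)\<^sup>2)) \<partial>M)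
      = (\<integral>\<^sup>+x. ennreal (gauss_density S x) * ennreal (exp (\<mu> * (x \<bullet> w)\<^sup>2)) \<partial>lborel)"
    using distributed_nn_integral[OF dist hm] by (simp add: w_def)
  also have "\<dots> = (\<integral>\<^sup>+x. ennreal (gauss_density S x) * ennreal (exp (\<mu> * ((transpose U *v x)$j)\<^sup>2)) \<partial>lborel)"
    by (simp only: xw)
  also have "\<dots> = (\<integral>\<^sup>+x. ennreal (exp (\<mu> * ((transpose U *v x)$j)\<^sup>2)) * ennreal (gauss_density S x) \<partial>lborel)"
    by (simp add: mult.commute)
  also have "\<dots> = (\<integral>\<^sup>+t. ennreal (exp (\<mu> * t\<^sup>2)) * ennreal (normal_density 0 (sqrt ((transpose U ** S ** U)$j$j)) t) \<partial>lborel)"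
    by (rule gauss_marginal[OF injr BF(1,2) off dpos one gm])
  also have "\<dots> = ennreal (1 / sqrt (1 - 2 * \<mu> * (sqrt ((transpose U ** S ** U)$j$j))\<^sup>2))"
    by (rule normal_mgf_sq) (use dpos[of j] a BF(3) in auto)
  also have "\<dots> = ennreal (1 / sqrt (1 - 2 * \<mu> * Omtil S \<pi> $ j $ j))"
    using dpos[of j] BF(3) by simp
  finally show ?thesis .
qed


lemma mgf_sum:
  fixes S :: "real^('p::{finite,linorder})^('p::{finite,linorder})"
    and X :: "'w \<Rightarrow> nat \<Rightarrow> real^('p::{finite,linorder})"
  assumes M: "prob_space M" and pd: "pos_def_mat S" and p: "\<pi> permutes UNIV"
    and dist: "\<forall>i<n. distributed M lborel (\<lambda>\<omega>. X \<omega> i) (\<lambda>x. ennreal (gauss_density S x))"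
    and ind: "prob_space.indep_vars M (\<lambda>_. borel) (\<lambda>i \<omega>. X \<omega> i) {..<n}"
    and a: "1 - 2 * \<mu> * Omtil S \<pi> $ j $ j > 0"
  shows "(\<integral>\<^sup>+\<omega>. ennreal (exp (\<mu> * (\<Sum>i<n. (X \<omega> i \<bullet> vcol S \<pi> j)\<^sup>2))) \<partial>M)
       = ennreal ((1 / sqrt (1 - 2 * \<mu> * Omtil S \<pi> $ j $ j)) ^ n)"
proof -
  interpret prob_space M by (rule M)
  define v where "v = vcol S \<pi> j"
  define h where "h = (\<lambda>x. ennreal (exp (\<mu> * (x \<bullet> v)\<^sup>2)))"
  have hm: "h \<in> borel_measurable borel" unfolding h_def by measurable
  have ind2: "indep_vars (\<lambda>_. borel) (\<lambda>i \<omega>. h (X \<omega> i)) {..<n}"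
    by (rule indep_vars_compose2[OF ind]) (use hm in simp)
  have "(\<integral>\<^sup>+\<omega>. ennreal (exp (\<mu> * (\<Sum>i<n. (X \<omega> i \<bullet> v)\<^sup>2))) \<partial>M) = (\<integral>\<^sup>+\<omega>. (\<Prod>i<n. h (X \<omega> i)) \<partial>M)"
  proof (rule nn_integral_cong)
    fix \<omega>
    have "exp (\<mu> * (\<Sum>i<n. (X \<omega> i \<bullet> v)\<^sup>2)) = (\<Prod>i<n. exp (\<mu> * (X \<omega> i \<bullet> v)\<^sup>2))"
      by (simp add: sum_distrib_left exp_sum)
    then show "ennreal (exp (\<mu> * (\<Sum>i<n. (X \<omega> i \<bullet> v)\<^sup>2))) = (\<Prod>i<n. h (X \<omega> i))"
      by (simp add: h_def prod_ennreal)
  qed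
  also have "\<dots> = (\<Prod>i<n. \<integral>\<^sup>+\<omega>. h (X \<omega> i) \<partial>M)"
    by (rule indep_vars_nn_integral[OF _ ind2]) auto
  also have "\<dots> = (\<Prod>i<n. ennreal (1 / sqrt (1 - 2 * \<mu> * Omtil S \<pi> $ j $ j)))"
  proof (rule prod.cong[OF refl])
    fix i assume "i \<in> {..<n}"
    then have di: "distributed M lborel (\<lambda>\<omega>. X \<omega> i) (\<lambda>x. ennreal (gauss_density S x))" using dist by simp
    show "(\<integral>\<^sup>+\<omega>. h (X \<omega> i) \<partial>M) = ennreal (1 / sqrt (1 - 2 * \<mu> * Omtil S \<pi> $ j $ j))"
      unfolding h_def v_def by (rule row_mgf[OF M pd p di a])
  qed
  also have "\<dots> = ennreal ((1 / sqrt (1 - 2 * \<mu> * Omtil S \<pi> $ j $ j)) ^ n)"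
  proof -
    have nn: "0 \<le> 1 / sqrt (1 - 2 * \<mu> * Omtil S \<pi> $ j $ j)" using a by simp
    show ?thesis using ennreal_power[OF nn, of n] by simp
  qed
  finally show ?thesis unfolding v_def .
qed

lemma Y_meas:
  fixes X :: "'w \<Rightarrow> nat \<Rightarrow> real^('p::finite)"
  assumes dist: "\<forall>i<n. distributed M lborel (\<lambda>\<omega>. X \<omega> i) f"
  shows "(\<lambda>\<omega>. \<Sum>i<n. (X \<omega> i \<bullet> v)\<^sup>2) \<in> borel_measurable M"
proof -
  have m: "\<And>i. i < n \<Longrightarrow> (\<lambda>\<omega>. X \<omega> i) \<in> borel_measurable M"
    using dist distributed_measurable by (metis measurable_lborel1 measurable_cong_sets sets_lborel)
  show ?thesis by (intro borel_measurable_sum) (use m in measurable)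
qed


lemma chernoff_gen:
  fixes S :: "real^('p::{finite,linorder})^('p::{finite,linorder})"
    and X :: "'w \<Rightarrow> nat \<Rightarrow> real^('p::{finite,linorder})"
  assumes M: "prob_space M" and pd: "pos_def_mat S" and p: "\<pi> permutes UNIV"
    and dist: "\<forall>i<n. distributed M lborel (\<lambda>\<omega>. X \<omega> i) (\<lambda>x. ennreal (gauss_density S x))"
    and ind: "prob_space.indep_vars M (\<lambda>_. borel) (\<lambda>i \<omega>. X \<omega> i) {..<n}"
    and a: "1 - 2 * \<mu> * Omtil S \<pi> $ j $ j > 0"
    and P: "\<And>\<omega>. P \<omega> \<Longrightarrow> \<mu> * (\<Sum>i<n. (X \<omega> i \<bullet> vcol S \<pi> j)\<^sup>2) - \<theta> \<ge> 0"
    and Pm: "{\<omega>\<in>space M. P \<omega>} \<in> sets M"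
  shows "measure M {\<omega>\<in>space M. P \<omega>} \<le> exp (- \<theta>) * (1 / sqrt (1 - 2 * \<mu> * Omtil S \<pi> $ j $ j)) ^ n"
proof -
  interpret prob_space M by (rule M)
  define Y where "Y = (\<lambda>\<omega>. \<Sum>i<n. (X \<omega> i \<bullet> vcol S \<pi> j)\<^sup>2)"
  define A where "A = {\<omega>\<in>space M. P \<omega>}"
  have Ym: "Y \<in> borel_measurable M" unfolding Y_def by (rule Y_meas[OF dist])
  have "emeasure M A = (\<integral>\<^sup>+\<omega>. indicator A \<omega> \<partial>M)" using Pm unfolding A_def by simp
  also have "\<dots> \<le> (\<integral>\<^sup>+\<omega>. ennreal (exp (- \<theta>)) * ennreal (exp (\<mu> * Y \<omega>)) \<partial>M)"
  proof (rule nn_integral_mono)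
    fix \<omega> assume "\<omega> \<in> space M"
    have eq: "ennreal (exp (- \<theta>)) * ennreal (exp (\<mu> * Y \<omega>)) = ennreal (exp (\<mu> * Y \<omega> - \<theta>))"
      by (simp add: ennreal_mult[symmetric] exp_diff exp_minus field_simps)
    show "indicator A \<omega> \<le> ennreal (exp (- \<theta>)) * ennreal (exp (\<mu> * Y \<omega>))"
    proof (cases "\<omega> \<in> A")
      case True
      then have "P \<omega>" by (simp add: A_def)
      then have "1 \<le> exp (\<mu> * Y \<omega> - \<theta>)" using P unfolding Y_def by simp
      then show ?thesis using True eq by simp
    qed simp
  qed
  also have "\<dots> = ennreal (exp (- \<theta>)) * (\<integral>\<^sup>+\<omega>. ennreal (exp (\<mu> * Y \<omega>)) \<partial>M)"
    by (rule nn_integral_cmult) (use Ym in measurable)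
  also have "\<dots> = ennreal (exp (- \<theta>)) * ennreal ((1 / sqrt (1 - 2 * \<mu> * Omtil S \<pi> $ j $ j)) ^ n)"
    unfolding Y_def by (simp only: mgf_sum[OF M pd p dist ind a])
  also have "\<dots> = ennreal (exp (- \<theta>) * (1 / sqrt (1 - 2 * \<mu> * Omtil S \<pi> $ j $ j)) ^ n)"
    using a by (simp add: ennreal_mult)
  finally have "emeasure M A \<le> ennreal (exp (- \<theta>) * (1 / sqrt (1 - 2 * \<mu> * Omtil S \<pi> $ j $ j)) ^ n)" .
  then show ?thesis unfolding A_def emeasure_eq_measure using a
    by (subst (asm) ennreal_le_iff) auto
qed

lemma inv_sqrt_pow:
  assumes "y > 0" shows "(1 / sqrt y) ^ n = exp (- (real n / 2) * ln y)"
proof -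
  have "1 / sqrt y = exp (- ln y / 2)"
    using assms by (simp add: powr_half_sqrt[symmetric] powr_def exp_minus field_simps)
  then have "(1 / sqrt y) ^ n = exp (- ln y / 2) ^ n" by simp
  also have "\<dots> = exp (real n * (- ln y / 2))" by (rule exp_of_nat_mult[symmetric])
  finally show ?thesis by (simp add: field_simps)
qed

lemma tail_bound_upper:
  fixes s :: real
  assumes s0: "0 \<le> s" and s1: "s \<le> 1/2" and sg: "\<sigma>2 > 0"
  shows "exp (- (s / (2 * \<sigma>2) * (real n * (1 + 4 * s) * \<sigma>2))) * (1 / sqrt (1 - 2 * (s / (2 * \<sigma>2)) * \<sigma>2)) ^ n
      \<le> exp (- (real n * s\<^sup>2))"
proof -
  have e1: "s / (2 * \<sigma>2) * (real n * (1 + 4 * s) * \<sigma>2) = real n * s * (1 + 4 * s) / 2" using sg by simp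
  have e2: "1 - 2 * (s / (2 * \<sigma>2)) * \<sigma>2 = 1 - s" using sg by simp
  have l: "- s - 2 * s\<^sup>2 \<le> ln (1 - s)" by (rule ln_one_minus_pos_lower_bound[OF s0 s1])
  have "exp (- (real n * s * (1 + 4 * s) / 2)) * exp (- (real n / 2) * ln (1 - s))
      = exp (- (real n * s * (1 + 4 * s) / 2) - (real n / 2) * ln (1 - s))" by (simp add: exp_add[symmetric])
  also have "\<dots> \<le> exp (- (real n * s\<^sup>2))"
  proof -
    define Lx where "Lx = real n / 2 * ln (1 - s)"
    define Qy where "Qy = real n / 2 * (- s - 2 * s\<^sup>2)"
    have h: "Qy \<le> Lx" unfolding Lx_def Qy_def using l by (intro mult_left_mono) auto
    have eq: "- (real n * s * (1 + 4 * s) / 2) - (real n / 2) * ln (1 - s) = - (real n * s\<^sup>2) - (Lx - Qy)"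
      unfolding Lx_def Qy_def by (simp add: field_simps power2_eq_square)
    show ?thesis unfolding eq using h by simp
  qed
  finally show ?thesis unfolding e1 e2 using inv_sqrt_pow[of "1 - s" n] s1 by simp
qed

lemma tail_bound_lower:
  fixes s :: real
  assumes s0: "0 \<le> s" and s1: "s \<le> 1/2" and sg: "\<sigma>2 > 0"
  shows "exp (- (- (3 * s / (4 * \<sigma>2)) * (real n * (1 - 3 * s) * \<sigma>2))) * (1 / sqrt (1 - 2 * (- (3 * s / (4 * \<sigma>2))) * \<sigma>2)) ^ n
      \<le> exp (- (real n * s\<^sup>2))"
proof -
  have e1: "- (- (3 * s / (4 * \<sigma>2)) * (real n * (1 - 3 * s) * \<sigma>2)) = 3 * real n * s * (1 - 3 * s) / 4" using sg by simp
  have e2: "1 - 2 * (- (3 * s / (4 * \<sigma>2))) * \<sigma>2 = 1 + 3 * s / 2" using sg by simp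
  have l: "3 * s / 2 - (3 * s / 2)\<^sup>2 \<le> ln (1 + 3 * s / 2)"
    by (rule ln_one_plus_pos_lower_bound) (use s0 s1 in auto)
  have "exp (3 * real n * s * (1 - 3 * s) / 4) * exp (- (real n / 2) * ln (1 + 3 * s / 2))
      = exp (3 * real n * s * (1 - 3 * s) / 4 - (real n / 2) * ln (1 + 3 * s / 2))" by (simp add: exp_add[symmetric])
  also have "\<dots> \<le> exp (- (real n * s\<^sup>2))"
  proof -
    define Lx where "Lx = real n / 2 * ln (1 + 3 * s / 2)"
    define Qy where "Qy = real n / 2 * (3 * s / 2 - (3 * s / 2)\<^sup>2)"
    define N where "N = real n * s\<^sup>2"
    have h: "Qy \<le> Lx" unfolding Lx_def Qy_def using l by (intro mult_left_mono) auto
    have N0: "0 \<le> N" unfolding N_def by simp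
    have eq: "3 * real n * s * (1 - 3 * s) / 4 - (real n / 2) * ln (1 + 3 * s / 2) = - (9 / 8) * N - (Lx - Qy)"
      unfolding Lx_def Qy_def N_def by (simp add: field_simps power2_eq_square)
    have "- (9 / 8) * N - (Lx - Qy) \<le> - N" using h N0 by simp
    then show ?thesis unfolding eq N_def by simp
  qed
  finally show ?thesis unfolding e1 e2 using inv_sqrt_pow[of "1 + 3 * s / 2" n] s0 by simp
qed


lemma det_part:
  fixes S :: "real^('p::{finite,linorder})^('p::{finite,linorder})"
    and x :: "nat \<Rightarrow> real^('p::{finite,linorder})"
  assumes pd: "pos_def_mat S" and mt: "min_trace_perm S \<pi>0" and ph: "\<pi>h permutes UNIV"
    and n: "real n > 0" and s0: "0 \<le> s"
    and up: "\<And>j. (\<Sum>i<n. (x i \<bullet> vcol S \<pi>0 j)\<^sup>2) \<le> real n * (1 + 4 * s) * Omtil S \<pi>0 $ j $ j"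
    and lo: "\<And>j. \<not> (\<Sum>i<n. (x i \<bullet> vcol S \<pi>h j)\<^sup>2) < real n * (1 - 3 * s) * Omtil S \<pi>h $ j $ j"
  shows "lossF n x (Btil S \<pi>0) - lossF n x (Btil S \<pi>h) \<le> 7 * s * trace (Omtil S \<pi>0)"
proof -
  have p0: "\<pi>0 permutes UNIV" using mt unfolding min_trace_perm_def by blast
  define T0 where "T0 = trace (Omtil S \<pi>0)"
  define Th where "Th = trace (Omtil S \<pi>h)"
  have T0h: "T0 \<le> Th" using mt ph unfolding min_trace_perm_def T0_def Th_def by blast
  have T0nn: "0 \<le> T0" unfolding T0_def trace_def
    by (rule sum_nonneg) (use Btil_facts(5)[OF pd p0] in \<open>simp add: less_imp_le\<close>)
  define Y0 where "Y0 = (\<Sum>j\<in>UNIV. \<Sum>i<n. (x i \<bullet> vcol S \<pi>0 j)\<^sup>2)"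
  define Yh where "Yh = (\<Sum>j\<in>UNIV. \<Sum>i<n. (x i \<bullet> vcol S \<pi>h j)\<^sup>2)"
  have L0: "lossF n x (Btil S \<pi>0) = Y0 / (2 * real n)" unfolding lossF_vcol Y0_def by simp
  have Lh: "lossF n x (Btil S \<pi>h) = Yh / (2 * real n)" unfolding lossF_vcol Yh_def by simp
  have Y0b: "Y0 \<le> real n * (1 + 4 * s) * T0"
  proof -
    have "Y0 \<le> (\<Sum>j\<in>UNIV. real n * (1 + 4 * s) * Omtil S \<pi>0 $ j $ j)"
      unfolding Y0_def by (rule sum_mono) (rule up)
    also have "\<dots> = real n * (1 + 4 * s) * T0" unfolding T0_def trace_def by (simp add: sum_distrib_left)
    finally show ?thesis .
  qed
  have Yhb: "real n * (1 - 3 * s) * Th \<le> Yh"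
  proof -
    have "real n * (1 - 3 * s) * Th = (\<Sum>j\<in>UNIV. real n * (1 - 3 * s) * Omtil S \<pi>h $ j $ j)"
      unfolding Th_def trace_def by (simp add: sum_distrib_left)
    also have "\<dots> \<le> Yh" unfolding Yh_def by (rule sum_mono) (use lo in \<open>simp add: not_less\<close>)
    finally show ?thesis .
  qed
  have Yh0: "0 \<le> Yh" unfolding Yh_def by (intro sum_nonneg) simp
  have nT0: "0 \<le> real n * T0" using n T0nn by simp
  have key: "Y0 - Yh \<le> 14 * real n * s * T0"
  proof (cases "1 - 3 * s \<ge> 0")
    case True
    have "real n * (1 - 3 * s) * T0 \<le> real n * (1 - 3 * s) * Th"
      using T0h True n by (intro mult_left_mono) auto
    then have "Y0 - Yh \<le> real n * (1 + 4 * s) * T0 - real n * (1 - 3 * s) * T0" using Y0b Yhb by linarith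
    also have "\<dots> = 7 * s * (real n * T0)" by (simp add: algebra_simps)
    also have "\<dots> \<le> 14 * s * (real n * T0)" using s0 nT0 by (intro mult_right_mono) auto
    finally show ?thesis by (simp add: algebra_simps)
  next
    case False
    then have s3: "1 + 4 * s \<le> 14 * s" by simp
    have "Y0 - Yh \<le> (1 + 4 * s) * (real n * T0)" using Y0b Yh0 by (simp add: algebra_simps)
    also have "\<dots> \<le> (14 * s) * (real n * T0)" using s3 nT0 by (rule mult_right_mono)
    finally show ?thesis by (simp add: algebra_simps)
  qed
  have "lossF n x (Btil S \<pi>0) - lossF n x (Btil S \<pi>h) = (Y0 - Yh) / (2 * real n)"
    unfolding L0 Lh by (simp add: diff_divide_distrib)
  also have "\<dots> \<le> (14 * real n * s * T0) / (2 * real n)" using key n by (intro divide_right_mono) auto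
  also have "\<dots> = 7 * s * T0" using n by simp
  finally show ?thesis unfolding T0_def .
qed


lemma upper_event:
  fixes S :: "real^('p::{finite,linorder})^('p::{finite,linorder})"
    and X :: "'w \<Rightarrow> nat \<Rightarrow> real^('p::{finite,linorder})"
  assumes M: "prob_space M" and pd: "pos_def_mat S" and p: "\<pi> permutes UNIV"
    and dist: "\<forall>i<n. distributed M lborel (\<lambda>\<omega>. X \<omega> i) (\<lambda>x. ennreal (gauss_density S x))"
    and ind: "prob_space.indep_vars M (\<lambda>_. borel) (\<lambda>i \<omega>. X \<omega> i) {..<n}"
    and s0: "0 \<le> s" and s1: "s < 1/2"
  shows "measure M {\<omega>\<in>space M. real n * (1 + 4 * s) * Omtil S \<pi> $ j $ j < (\<Sum>i<n. (X \<omega> i \<bullet> vcol S \<pi> j)\<^sup>2)}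
      \<le> exp (- (real n * s\<^sup>2))"
proof -
  define \<sigma> where "\<sigma> = Omtil S \<pi> $ j $ j"
  have sg: "\<sigma> > 0" unfolding \<sigma>_def by (rule Btil_facts(5)[OF pd p])
  define \<mu> where "\<mu> = s / (2 * \<sigma>)"
  have \<mu>0: "\<mu> \<ge> 0" unfolding \<mu>_def using s0 sg by simp
  have a: "1 - 2 * \<mu> * Omtil S \<pi> $ j $ j > 0" using sg s1 unfolding \<mu>_def \<sigma>_def[symmetric] by simp
  have Ym[measurable]: "(\<lambda>\<omega>. \<Sum>i<n. (X \<omega> i \<bullet> vcol S \<pi> j)\<^sup>2) \<in> borel_measurable M" by (rule Y_meas[OF dist])
  have "measure M {\<omega>\<in>space M. real n * (1 + 4 * s) * \<sigma> < (\<Sum>i<n. (X \<omega> i \<bullet> vcol S \<pi> j)\<^sup>2)}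
      \<le> exp (- (\<mu> * (real n * (1 + 4 * s) * \<sigma>))) * (1 / sqrt (1 - 2 * \<mu> * Omtil S \<pi> $ j $ j)) ^ n"
  proof (rule chernoff_gen[OF M pd p dist ind a])
    fix \<omega> assume "real n * (1 + 4 * s) * \<sigma> < (\<Sum>i<n. (X \<omega> i \<bullet> vcol S \<pi> j)\<^sup>2)"
    then have "0 \<le> \<mu> * ((\<Sum>i<n. (X \<omega> i \<bullet> vcol S \<pi> j)\<^sup>2) - real n * (1 + 4 * s) * \<sigma>)"
      using \<mu>0 by simp
    then show "0 \<le> \<mu> * (\<Sum>i<n. (X \<omega> i \<bullet> vcol S \<pi> j)\<^sup>2) - \<mu> * (real n * (1 + 4 * s) * \<sigma>)"
      by (simp add: right_diff_distrib)
  next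
    show "{\<omega> \<in> space M. real n * (1 + 4 * s) * \<sigma> < (\<Sum>i<n. (X \<omega> i \<bullet> vcol S \<pi> j)\<^sup>2)} \<in> sets M"
      by measurable
  qed
  also have "\<dots> \<le> exp (- (real n * s\<^sup>2))"
    using tail_bound_upper[OF s0 _ sg, of n] s1 unfolding \<mu>_def \<sigma>_def by simp
  finally show ?thesis unfolding \<sigma>_def .
qed

lemma lower_event:
  fixes S :: "real^('p::{finite,linorder})^('p::{finite,linorder})"
    and X :: "'w \<Rightarrow> nat \<Rightarrow> real^('p::{finite,linorder})"
  assumes M: "prob_space M" and pd: "pos_def_mat S" and p: "\<pi> permutes UNIV"
    and dist: "\<forall>i<n. distributed M lborel (\<lambda>\<omega>. X \<omega> i) (\<lambda>x. ennreal (gauss_density S x))"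
    and ind: "prob_space.indep_vars M (\<lambda>_. borel) (\<lambda>i \<omega>. X \<omega> i) {..<n}"
    and s0: "0 \<le> s" and s1: "s < 1/2"
  shows "measure M {\<omega>\<in>space M. (\<Sum>i<n. (X \<omega> i \<bullet> vcol S \<pi> j)\<^sup>2) < real n * (1 - 3 * s) * Omtil S \<pi> $ j $ j}
      \<le> exp (- (real n * s\<^sup>2))"
proof -
  define \<sigma> where "\<sigma> = Omtil S \<pi> $ j $ j"
  have sg: "\<sigma> > 0" unfolding \<sigma>_def by (rule Btil_facts(5)[OF pd p])
  define \<mu> where "\<mu> = - (3 * s / (4 * \<sigma>))"
  have \<mu>0: "\<mu> \<le> 0" unfolding \<mu>_def using s0 sg by simp
  have a: "1 - 2 * \<mu> * Omtil S \<pi> $ j $ j > 0"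
  proof -
    have "1 - 2 * \<mu> * \<sigma> = 1 + 3 * s / 2" unfolding \<mu>_def using sg by simp
    then show ?thesis using s0 unfolding \<sigma>_def by simp
  qed
  have Ym[measurable]: "(\<lambda>\<omega>. \<Sum>i<n. (X \<omega> i \<bullet> vcol S \<pi> j)\<^sup>2) \<in> borel_measurable M" by (rule Y_meas[OF dist])
  have "measure M {\<omega>\<in>space M. (\<Sum>i<n. (X \<omega> i \<bullet> vcol S \<pi> j)\<^sup>2) < real n * (1 - 3 * s) * \<sigma>}
      \<le> exp (- (\<mu> * (real n * (1 - 3 * s) * \<sigma>))) * (1 / sqrt (1 - 2 * \<mu> * Omtil S \<pi> $ j $ j)) ^ n"
  proof (rule chernoff_gen[OF M pd p dist ind a])
    fix \<omega> assume "(\<Sum>i<n. (X \<omega> i \<bullet> vcol S \<pi> j)\<^sup>2) < real n * (1 - 3 * s) * \<sigma>"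
    then have "0 \<le> \<mu> * ((\<Sum>i<n. (X \<omega> i \<bullet> vcol S \<pi> j)\<^sup>2) - real n * (1 - 3 * s) * \<sigma>)"
      using \<mu>0 by (intro mult_nonpos_nonpos) auto
    then show "0 \<le> \<mu> * (\<Sum>i<n. (X \<omega> i \<bullet> vcol S \<pi> j)\<^sup>2) - \<mu> * (real n * (1 - 3 * s) * \<sigma>)"
      by (simp add: right_diff_distrib)
  next
    show "{\<omega> \<in> space M. (\<Sum>i<n. (X \<omega> i \<bullet> vcol S \<pi> j)\<^sup>2) < real n * (1 - 3 * s) * \<sigma>} \<in> sets M"
      by measurable
  qed
  also have "\<dots> \<le> exp (- (real n * s\<^sup>2))"
    using tail_bound_lower[OF s0 _ sg, of n] s1 unfolding \<mu>_def \<sigma>_def by simp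
  finally show ?thesis unfolding \<sigma>_def .
qed

theorem proposition8:
  fixes M :: "'w measure"
    and S :: "real^('p::{finite,linorder})^('p::{finite,linorder})"
    and n :: nat
    and X :: "'w \<Rightarrow> nat \<Rightarrow> real^('p::{finite,linorder})"
    and \<rho> :: "real \<Rightarrow> real"
    and Bhat :: "'w \<Rightarrow> real^('p::{finite,linorder})^('p::{finite,linorder})"
    and pihat :: "'w \<Rightarrow> ('p::{finite,linorder}) \<Rightarrow> ('p::{finite,linorder})"
    and C \<delta>0 :: real
    and \<pi>0 :: "('p::{finite,linorder}) \<Rightarrow> ('p::{finite,linorder})"
  assumes "prob_space M"
    and "pos_def_mat S"
    and "\<forall>i<n. distributed M lborel (\<lambda>\<omega>. X \<omega> i) (\<lambda>x. ennreal (gauss_density S x))"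
    and "prob_space.indep_vars M (\<lambda>_. borel) (\<lambda>i \<omega>. X \<omega> i) {..<n}"
    and "\<forall>t\<ge>0. \<rho> t \<ge> 0"
    and "\<forall>\<omega>\<in>space M. Bhat \<omega> \<in> DAGs \<and>
           (\<forall>B\<in>DAGs. Qobj n (X \<omega>) \<rho> (Bhat \<omega>) \<le> Qobj n (X \<omega>) \<rho> B)"
    and "\<forall>\<omega>\<in>space M. pihat \<omega> \<in> Pi_hat (Bhat \<omega>)"
    and "C > 0" and "\<delta>0 > 0"
    and "real n > 4 * (C + 1) * (real (dmax S) + 1) * ln (real CARD('p))"
    and "min_trace_perm S \<pi>0"
    and "pen \<rho> (Btil S \<pi>0) / trace (Omtil S \<pi>0) \<ge>
           (1 / \<delta>0) * sqrt (50 * (C + 1) * (real (dmax S) + 1) * ln (real CARD('p)) / real n)"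
  shows "\<exists>A\<in>sets M.
           {\<omega>\<in>space M. lossF n (X \<omega>) (Btil S \<pi>0) - lossF n (X \<omega>) (Btil S (pihat \<omega>))
                          > \<delta>0 * pen \<rho> (Btil S \<pi>0)} \<subseteq> A
         \<and> measure M A \<le> 2 * exp (- C * (real (dmax S) + 1) * ln (real CARD('p)))"
proof -
  note M = assms(1) and pd = assms(2) and dist = assms(3) and ind = assms(4)
    and pih = assms(7) and Cpos = assms(8) and dpos = assms(9) and nbig = assms(10)
    and mt = assms(11) and penb = assms(12)
  interpret P: prob_space M by (rule M)
  define p where "p = real CARD('p)"
  define d where "d = real (dmax S)"
  define t where "t = (C + 1) * (d + 1) * ln p"
  define s where "s = sqrt (t / real n)"
  have p1: "1 \<le> p" unfolding p_def by simp
  have lnp: "0 \<le> ln p" using p1 by simp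
  have t0: "0 \<le> t" unfolding t_def d_def using Cpos lnp by simp
  have nt: "4 * t < real n" using nbig unfolding t_def d_def p_def by (simp only: mult.assoc)
  have npos: "real n > 0" using nt t0 by linarith
  have s0: "0 \<le> s" unfolding s_def using t0 npos by simp
  have ss: "s\<^sup>2 = t / real n" unfolding s_def using t0 npos by simp
  have nss: "real n * s\<^sup>2 = t" using ss npos by simp
  have s1: "s < 1/2"
  proof (rule ccontr)
    assume "\<not> s < 1/2"
    then have "(1/2)\<^sup>2 \<le> s\<^sup>2" using s0 by (intro power_mono) auto
    then have "real n * (1/2)\<^sup>2 \<le> real n * s\<^sup>2" using npos by (intro mult_left_mono) auto
    then have "real n / 4 \<le> t" using nss by (simp add: power2_eq_square)
    then show False using nt by simp
  qed
  have p0: "\<pi>0 permutes UNIV" using mt unfolding min_trace_perm_def by blast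
  define Y where "Y = (\<lambda>v \<omega>. \<Sum>i<n. (X \<omega> i \<bullet> v)\<^sup>2)"
  have Ym[measurable]: "Y v \<in> borel_measurable M" for v unfolding Y_def by (rule Y_meas[OF dist])
  define Up where "Up = (\<lambda>j. {\<omega>\<in>space M. real n * (1 + 4 * s) * Omtil S \<pi>0 $ j $ j < Y (vcol S \<pi>0 j) \<omega>})"
  define Lo where "Lo = (\<lambda>v. {\<omega>\<in>space M. Y v \<omega> < real n * (1 - 3 * s) * (v \<bullet> (S *v v))})"
  define A where "A = (\<Union>j. Up j) \<union> (\<Union>j. \<Union>v\<in>Vset S j. Lo v)"
  have Up_sets: "Up j \<in> sets M" for j unfolding Up_def by measurable
  have Lo_sets: "Lo v \<in> sets M" for v unfolding Lo_def by measurable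
  have finV: "finite (Vset S j)" for j
  proof -
    have "Vset S j = (\<lambda>\<pi>. vcol S \<pi> j) ` {\<pi>. \<pi> permutes (UNIV::'p set)}" unfolding Vset_def by auto
    then show ?thesis using finite_permutations[of "UNIV::'p set"] by simp
  qed
  have A_sets: "A \<in> sets M" unfolding A_def by (intro sets.Un sets.finite_UN) (auto simp: Up_sets Lo_sets finV)
  define T0 where "T0 = trace (Omtil S \<pi>0)"
  have T0pos: "T0 > 0" unfolding T0_def trace_def
    by (rule sum_pos) (use Btil_facts(5)[OF pd p0] in auto)
  have penT: "7 * s * T0 \<le> \<delta>0 * pen \<rho> (Btil S \<pi>0)"
  proof -
    have "sqrt (50 * (C + 1) * (real (dmax S) + 1) * ln (real CARD('p)) / real n) = sqrt 50 * s"
      unfolding s_def t_def d_def p_def by (simp add: real_sqrt_mult[symmetric] mult.assoc)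
    moreover have "7 \<le> sqrt 50" by (rule real_le_rsqrt) simp
    ultimately have "7 * s \<le> sqrt (50 * (C + 1) * (real (dmax S) + 1) * ln (real CARD('p)) / real n)"
      using s0 by (simp add: mult_right_mono)
    also have "\<dots> \<le> \<delta>0 * (pen \<rho> (Btil S \<pi>0) / T0)"
      using penb dpos unfolding T0_def by (simp add: field_simps)
    finally have "7 * s \<le> \<delta>0 * (pen \<rho> (Btil S \<pi>0) / T0)" .
    then have "7 * s * T0 \<le> \<delta>0 * (pen \<rho> (Btil S \<pi>0) / T0) * T0" by (rule mult_right_mono) (use T0pos in auto)
    also have "\<dots> = \<delta>0 * pen \<rho> (Btil S \<pi>0)" using T0pos by simp
    finally show ?thesis .
  qed
  have incl: "{\<omega>\<in>space M. lossF n (X \<omega>) (Btil S \<pi>0) - lossF n (X \<omega>) (Btil S (pihat \<omega>))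
                          > \<delta>0 * pen \<rho> (Btil S \<pi>0)} \<subseteq> A"
  proof
    fix \<omega> assume "\<omega> \<in> {\<omega>\<in>space M. lossF n (X \<omega>) (Btil S \<pi>0) - lossF n (X \<omega>) (Btil S (pihat \<omega>))
                          > \<delta>0 * pen \<rho> (Btil S \<pi>0)}"
    then have \<omega>: "\<omega> \<in> space M" and gt: "lossF n (X \<omega>) (Btil S \<pi>0) - lossF n (X \<omega>) (Btil S (pihat \<omega>)) > \<delta>0 * pen \<rho> (Btil S \<pi>0)"
      by auto
    show "\<omega> \<in> A"
    proof (rule ccontr)
      assume nA: "\<omega> \<notin> A"
      have ph: "pihat \<omega> permutes UNIV" using pih \<omega> unfolding Pi_hat_def by blast
      have up: "(\<Sum>i<n. (X \<omega> i \<bullet> vcol S \<pi>0 j)\<^sup>2) \<le> real n * (1 + 4 * s) * Omtil S \<pi>0 $ j $ j" for j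
        using nA \<omega> unfolding A_def Up_def Y_def by (auto simp: not_less)
      have lo: "\<not> (\<Sum>i<n. (X \<omega> i \<bullet> vcol S (pihat \<omega>) j)\<^sup>2) < real n * (1 - 3 * s) * Omtil S (pihat \<omega>) $ j $ j" for j
      proof -
        have vV: "vcol S (pihat \<omega>) j \<in> Vset S j" unfolding Vset_def using ph by blast
        then have "\<omega> \<notin> Lo (vcol S (pihat \<omega>) j)" using nA unfolding A_def by blast
        then show ?thesis using \<omega> vcol_quad[OF pd ph, of j] unfolding Lo_def Y_def by simp
      qed
      have "lossF n (X \<omega>) (Btil S \<pi>0) - lossF n (X \<omega>) (Btil S (pihat \<omega>)) \<le> 7 * s * T0"
        unfolding T0_def by (rule det_part[OF pd mt ph npos s0 up lo])
      with penT gt show False by linarith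
    qed
  qed
  have bU: "measure M (Up j) \<le> exp (- t)" for j
    using upper_event[OF M pd p0 dist ind s0 s1, of j] nss unfolding Up_def Y_def by simp
  have bL: "measure M (Lo v) \<le> exp (- t)" if vV: "v \<in> Vset S j" for v j
  proof -
    obtain \<pi> where p: "\<pi> permutes UNIV" and v: "v = vcol S \<pi> j" using vV unfolding Vset_def by blast
    show ?thesis using lower_event[OF M pd p dist ind s0 s1, of j] nss vcol_quad[OF pd p, of j]
      unfolding Lo_def Y_def v by simp
  qed
  have m1: "measure M (\<Union>j. Up j) \<le> p * exp (- t)"
  proof -
    have "measure M (\<Union>j. Up j) \<le> (\<Sum>j\<in>UNIV. measure M (Up j))"
      by (rule measure_UNION_le) (auto simp: Up_sets)
    also have "\<dots> \<le> (\<Sum>j\<in>(UNIV::'p set). exp (- t))" by (rule sum_mono) (rule bU)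
    also have "\<dots> = p * exp (- t)" unfolding p_def by simp
    finally show ?thesis .
  qed
  have m2: "measure M (\<Union>j. \<Union>v\<in>Vset S j. Lo v) \<le> p * p ^ dmax S * exp (- t)"
  proof -
    have "measure M (\<Union>j. \<Union>v\<in>Vset S j. Lo v) \<le> (\<Sum>j\<in>UNIV. measure M (\<Union>v\<in>Vset S j. Lo v))"
      by (rule measure_UNION_le) (auto simp: Lo_sets finV)
    also have "\<dots> \<le> (\<Sum>j\<in>(UNIV::'p set). p ^ dmax S * exp (- t))"
    proof (rule sum_mono)
      fix j :: 'p
      have "measure M (\<Union>v\<in>Vset S j. Lo v) \<le> (\<Sum>v\<in>Vset S j. measure M (Lo v))"
        by (rule measure_UNION_le) (auto simp: Lo_sets finV)
      also have "\<dots> \<le> (\<Sum>v\<in>Vset S j. exp (- t))" by (rule sum_mono) (rule bL)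
      also have "\<dots> = real (card (Vset S j)) * exp (- t)" by simp
      also have "\<dots> \<le> p ^ dmax S * exp (- t)"
      proof -
        have "real (card (Vset S j)) \<le> real (CARD('p) ^ dmax S)" using card_Vset[OF pd, of j] by linarith
        then show ?thesis unfolding p_def by (simp add: mult_right_mono)
      qed
      finally show "measure M (\<Union>v\<in>Vset S j. Lo v) \<le> p ^ dmax S * exp (- t)" .
    qed
    also have "\<dots> = p * p ^ dmax S * exp (- t)" unfolding p_def by simp
    finally show ?thesis .
  qed
  have mA: "measure M A \<le> p * exp (- t) + p * p ^ dmax S * exp (- t)"
  proof -
    have "measure M A \<le> measure M (\<Union>j. Up j) + measure M (\<Union>j. \<Union>v\<in>Vset S j. Lo v)"
      unfolding A_def by (rule measure_Un_le; intro sets.finite_UN) (auto simp: Up_sets Lo_sets finV)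
    then show ?thesis using m1 m2 by linarith
  qed
  have final: "p * exp (- t) + p * p ^ dmax S * exp (- t) \<le> 2 * exp (- C * (real (dmax S) + 1) * ln (real CARD('p)))"
  proof -
    have pp: "p \<le> p * p ^ dmax S" using p1 by (simp add: one_le_power)
    have pe: "p * exp (- t) \<le> p * p ^ dmax S * exp (- t)" using pp by (rule mult_right_mono) simp
    have eqp: "p * p ^ dmax S = exp ((d + 1) * ln p)"
    proof -
      have "p * p ^ dmax S = p ^ Suc (dmax S)" by simp
      also have "\<dots> = exp (ln p) ^ Suc (dmax S)" using p1 by simp
      also have "\<dots> = exp (real (Suc (dmax S)) * ln p)" by (rule exp_of_nat_mult[symmetric])
      finally show ?thesis unfolding d_def by (simp add: algebra_simps)
    qed
    have "p * exp (- t) + p * p ^ dmax S * exp (- t) \<le> 2 * (p * p ^ dmax S * exp (- t))"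
      using pe by linarith
    also have "\<dots> = 2 * (exp ((d + 1) * ln p) * exp (- t))" by (simp only: eqp)
    also have "2 * (exp ((d + 1) * ln p) * exp (- t)) = 2 * exp (- C * (real (dmax S) + 1) * ln (real CARD('p)))"
      unfolding t_def d_def p_def by (simp add: exp_add[symmetric] algebra_simps)
    finally show ?thesis .
  qed
  show ?thesis using A_sets incl mA final by (intro bexI[of _ A]) auto
qed


end
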